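(* Under the standing setup, for all $n\ge n_0$, $$\mathbb{E}[\psi_{n,k}]\ge|E_n|^{-1}K^{-1}\alpha^{\ell}e^{Pk}\mu(G_{n,k}),$$ and moreover $$\lim_{n\to\infty}\frac1k\log\mathbb{E}[\psi_{n,k}]=P+\log\alpha.$$
   Context: Standing setup. $\mathcal{A}$ is a finite alphabet, $X\subset\mathcal{A}^{\mathbb{Z}}$ a non-trivial topologically mixing SFT with left shift $\sigma$, $f:X\to\mathbb{R}$ H\"older continuous with pressure $P=P_X(f)$, and $\mu$ the Gibbs measure (unique equilibrium state) of $f$, with entropy $h(\mu)$. $B_m(X)$ is the set of words of length $m$ in $X$; $[w]=\{x\in X:x_0\dots x_{|w|-1}=w\}$, $\mu(w)=\mu([w])$. Words are written $u=u_1\dots u_k$, $u_i^j=u_i\dots u_j$. For $w\in B_m(X)$, $S_mf(w)=\sup_{x\in[w]}\sum_{i=0}^{m-1}f(\sigma^ix)$. $K>1$ is a constant such that: (i) for all $m\ge1$, $x\in X$: $K^{-1}\le\mu(x_0\dots x_{m-1})/\exp(-Pm+\sum_{i=0}^{m-1}f(\sigma^ix))\le K$; (ii) $\mu(uv)\le K\mu(u)\mu(v)$ and $\mu(\sigma^{-|u|}[v]\mid[u])\le K\mu(v)$ whenever $uv\in B(X)$; (iii) for some $g_0\ge1$, all $g\ge g_0$ and words $u\in B_m(X)$, $v$: $\mu([u]\cap\sigma^{-(m+g)}[v])\ge K^{-1}\mu(u)\mu(v)$. $\gamma_0=\inf\{\gamma>0:\exists n_0\ \forall m\ge n_0\ \forall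 u\in B_m(X),\ \mu(u)\le\gamma^m\}$. Parameters: $\alpha\in(\gamma_0,1]$; $\gamma\in(\gamma_0,\alpha)$; $n_0$ such that $\mu(u)\le\gamma^{|u|}$ for all $u\in B(X)$ with $|u|\ge n_0$; $0<\delta<\frac14\log(\alpha/\gamma)$; $k=k(n)$ with $n/k\to0$ and $k=o(n^2/\log n)$; $\ell=k-n+1$. Random SFT: for each $n$, $\mathcal{F}_n\subset B_n(X)$ is random, each word included independently with probability $1-\alpha$; $\mathbb{E}$ is expectation. For a word $u$ of length $\ge n$, $W_n(u)$ is the set of distinct length-$n$ subwords of $u$, and $\xi_u=1$ if $W_n(u)\cap\mathcal{F}_n=\emptyset$, $\xi_u=0$ otherwise. $E_n=\{u\in B_n(X):|-\frac1n\log\mu(u)-h(\mu)|<\delta\}$, $G_{n,k}=\{u\in B_k(X): u_1^n=u_\ell^k\text{ and }u_1^n\in E_n\}$, and $\psi_{n,k}=|E_n|^{-1}\sum_{u\in G_{n,k}}e^{S_kf(u)}\xi_u$. *)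

theory Defs
  imports "HOL-Probability.Probability" "HOL-Library.Landau_Symbols"
begin

text \<open>Symbolic dynamics over a finite alphabet 'a: points of the full shift are
  bi-infinite sequences int => 'a; words are lists (u = u_1 ... u_k is the list [u_1,...,u_k]).\<close>

definition shift :: "(int \<Rightarrow> 'a) \<Rightarrow> (int \<Rightarrow> 'a)" where
  "shift x = (\<lambda>i. x (i + 1))"

definition word_at :: "(int \<Rightarrow> 'a) \<Rightarrow> int \<Rightarrow> nat \<Rightarrow> 'a list" where
  "word_at x i m = map (\<lambda>j. x (i + int j)) [0..<m]"

definition is_SFT :: "(int \<Rightarrow> 'a) set \<Rightarrow> bool" where
  "is_SFT X \<longleftrightarrow> (\<exists>F :: 'a list set. finite F \<and>
      X = {x. \<forall>i. \<forall>w\<in>F. word_at x i (length w) \<noteq> w})"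

definition Bn :: "(int \<Rightarrow> 'a) set \<Rightarrow> nat \<Rightarrow> 'a list set" where
  "Bn X m = (\<lambda>x. word_at x 0 m) ` X"

definition lang :: "(int \<Rightarrow> 'a) set \<Rightarrow> 'a list set" where
  "lang X = (\<Union>m. Bn X m)"

definition cyl :: "(int \<Rightarrow> 'a) set \<Rightarrow> 'a list \<Rightarrow> (int \<Rightarrow> 'a) set" where
  "cyl X w = {x \<in> X. word_at x 0 (length w) = w}"

text \<open>Topological mixing (with cylinders as basis of the topology).\<close>
definition top_mixing :: "(int \<Rightarrow> 'a) set \<Rightarrow> bool" where
  "top_mixing X \<longleftrightarrow> (\<forall>u\<in>lang X. \<forall>v\<in>lang X. \<exists>N. \<forall>n\<ge>N.
      \<exists>x\<in>X. word_at x 0 (length u) = u \<and> word_at x (int n) (length v) = v)"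

definition nontrivial :: "(int \<Rightarrow> 'a) set \<Rightarrow> bool" where
  "nontrivial X \<longleftrightarrow> (\<exists>x\<in>X. \<exists>y\<in>X. x \<noteq> y)"

text \<open>Hoelder continuity w.r.t. the standard metric d(x,y) = 2^(-min{|i| : x_i ~= y_i}).\<close>
definition holder_cont :: "(int \<Rightarrow> 'a) set \<Rightarrow> ((int \<Rightarrow> 'a) \<Rightarrow> real) \<Rightarrow> bool" where
  "holder_cont X f \<longleftrightarrow> (\<exists>C \<theta>. 0 < \<theta> \<and> \<theta> < 1 \<and>
     (\<forall>x\<in>X. \<forall>y\<in>X. \<forall>m::nat. (\<forall>i. \<bar>i\<bar> \<le> int m \<longrightarrow> x i = y i) \<longrightarrow> \<bar>f x - f y\<bar> \<le> C * \<theta> ^ m))"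

definition birkhoff :: "((int \<Rightarrow> 'a) \<Rightarrow> real) \<Rightarrow> nat \<Rightarrow> (int \<Rightarrow> 'a) \<Rightarrow> real" where
  "birkhoff f m x = (\<Sum>i<m. f ((shift ^^ i) x))"

definition Smf :: "(int \<Rightarrow> 'a) set \<Rightarrow> ((int \<Rightarrow> 'a) \<Rightarrow> real) \<Rightarrow> 'a list \<Rightarrow> real" where
  "Smf X f w = Sup (birkhoff f (length w) ` cyl X w)"

definition pressure :: "(int \<Rightarrow> 'a) set \<Rightarrow> ((int \<Rightarrow> 'a) \<Rightarrow> real) \<Rightarrow> real" where
  "pressure X f = lim (\<lambda>n. ln (\<Sum>w\<in>Bn X n. exp (Smf X f w)) / real n)"

definition shift_space :: "(int \<Rightarrow> 'a) measure" where
  "shift_space = Pi\<^sub>M UNIV (\<lambda>_. count_space UNIV)"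

definition mu :: "(int \<Rightarrow> 'a) measure \<Rightarrow> (int \<Rightarrow> 'a) set \<Rightarrow> 'a list \<Rightarrow> real" where
  "mu M X w = measure M (cyl X w)"

definition inv_prob_on :: "(int \<Rightarrow> 'a) set \<Rightarrow> (int \<Rightarrow> 'a) measure \<Rightarrow> bool" where
  "inv_prob_on X \<nu> \<longleftrightarrow> prob_space \<nu> \<and> sets \<nu> = sets shift_space \<and> X \<in> sets \<nu> \<and>
     measure \<nu> X = 1 \<and>
     (\<forall>A\<in>sets \<nu>. shift -` A \<in> sets \<nu> \<and> measure \<nu> (shift -` A) = measure \<nu> A)"

text \<open>Measure-theoretic (Kolmogorov-Sinai) entropy, computed with the generating
  partition into 0-cylinders.\<close>
definition entropy :: "(int \<Rightarrow> 'a) set \<Rightarrow> (int \<Rightarrow> 'a) measure \<Rightarrow> real" where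
  "entropy X \<nu> = lim (\<lambda>n. (\<Sum>w\<in>Bn X n. - mu \<nu> X w * ln (mu \<nu> X w)) / real n)"

definition equilibrium_state :: "(int \<Rightarrow> 'a) set \<Rightarrow> ((int \<Rightarrow> 'a) \<Rightarrow> real) \<Rightarrow> (int \<Rightarrow> 'a) measure \<Rightarrow> bool" where
  "equilibrium_state X f \<nu> \<longleftrightarrow> inv_prob_on X \<nu> \<and> integrable \<nu> f \<and>
     entropy X \<nu> + (\<integral>x. f x \<partial>\<nu>) = pressure X f"

definition gamma0 :: "(int \<Rightarrow> 'a) measure \<Rightarrow> (int \<Rightarrow> 'a) set \<Rightarrow> real" where
  "gamma0 M X = Inf {\<gamma>. \<gamma> > 0 \<and> (\<exists>n0. \<forall>m\<ge>n0. \<forall>u\<in>Bn X m. mu M X u \<le> \<gamma> ^ m)}"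

definition E_set :: "(int \<Rightarrow> 'a) measure \<Rightarrow> (int \<Rightarrow> 'a) set \<Rightarrow> real \<Rightarrow> nat \<Rightarrow> 'a list set" where
  "E_set M X \<delta> n = {u \<in> Bn X n. \<bar>- (1 / real n) * ln (mu M X u) - entropy X M\<bar> < \<delta>}"

text \<open>G_(n,k): u_1^n = take n u, u_l^k = drop (k - n) u  (l = k - n + 1)\<close>
definition G_set :: "(int \<Rightarrow> 'a) measure \<Rightarrow> (int \<Rightarrow> 'a) set \<Rightarrow> real \<Rightarrow> nat \<Rightarrow> nat \<Rightarrow> 'a list set" where
  "G_set M X \<delta> n k = {u \<in> Bn X k. take n u = drop (k - n) u \<and> take n u \<in> E_set M X \<delta> n}"

definition subwords :: "nat \<Rightarrow> 'a list \<Rightarrow> 'a list set" where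
  "subwords n u = {take n (drop i u) | i. i + n \<le> length u}"

definition xi :: "nat \<Rightarrow> 'a list set \<Rightarrow> 'a list \<Rightarrow> real" where
  "xi n F u = (if subwords n u \<inter> F = {} then 1 else 0)"

text \<open>psi_(n,k) as a function of the realisation F = F_n of the random forbidden set\<close>
definition psi :: "(int \<Rightarrow> 'a) measure \<Rightarrow> (int \<Rightarrow> 'a) set \<Rightarrow> ((int \<Rightarrow> 'a) \<Rightarrow> real) \<Rightarrow> real \<Rightarrow>
    nat \<Rightarrow> nat \<Rightarrow> 'a list set \<Rightarrow> real" where
  "psi M X f \<delta> n k F = (1 / real (card (E_set M X \<delta> n))) *
     (\<Sum>u\<in>G_set M X \<delta> n k. exp (Smf X f u) * xi n F u)"

definition expected_psi :: "(int \<Rightarrow> 'a) measure \<Rightarrow> (int \<Rightarrow> 'a) set \<Rightarrow> ((int \<Rightarrow> 'a) \<Rightarrow> real) \<Rightarrow> real \<Rightarrow>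
    real \<Rightarrow> nat \<Rightarrow> nat \<Rightarrow> real" where
  "expected_psi M X f \<delta> \<alpha> n k =
     measure_pmf.expectation (Pi_pmf (Bn X n) False (\<lambda>_. bernoulli_pmf (1 - \<alpha>)))
       (\<lambda>b. psi M X f \<delta> n k {w \<in> Bn X n. b w})"

end

theory Submission
  imports Defs
begin

lemma funpow_shift: "(shift ^^ i) x = (\<lambda>j. x (j + int i))"
  by (induction i arbitrary: x) (auto simp: shift_def algebra_simps)

lemma word_at_shift: "word_at ((shift ^^ i) x) a m = word_at x (a + int i) m"
  by (simp add: word_at_def funpow_shift algebra_simps)

lemma length_word_at[simp]: "length (word_at x a m) = m"
  by (simp add: word_at_def)

lemma word_at_add: "word_at x a (m+n) = word_at x a m @ word_at x (a + int m) n"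
  by (rule nth_equalityI) (auto simp: word_at_def nth_append algebra_simps)

lemma take_drop_word_at: "p + q \<le> L \<Longrightarrow> take q (drop p (word_at x a L)) = word_at x (a + int p) q"
  by (rule nth_equalityI) (auto simp: word_at_def algebra_simps)

lemma shift_in_X: assumes "is_SFT X" "x \<in> X" shows "shift x \<in> X"
proof -
  obtain F where F: "X = {x. \<forall>i. \<forall>w\<in>F. word_at x i (length w) \<noteq> w}"
    using assms(1) unfolding is_SFT_def by blast
  have "word_at (shift x) i m = word_at x (i+1) m" for i m
    by (simp add: word_at_def shift_def algebra_simps)
  then show ?thesis using assms(2) F by auto
qed

lemma funpow_shift_in_X: assumes "is_SFT X" "x \<in> X" shows "(shift ^^ i) x \<in> X"
  using assms by (induction i) (auto intro: shift_in_X)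

lemma Bn_length: "w \<in> Bn X m \<Longrightarrow> length w = m"
  by (auto simp: Bn_def)

lemma Bn_finite: "finite (Bn X (m::nat) :: ('a::finite) list set)"
proof -
  have "Bn X m \<subseteq> {w. set w \<subseteq> (UNIV::'a set) \<and> length w = m}" by (auto simp: Bn_def)
  moreover have "finite {w. set w \<subseteq> (UNIV::'a set) \<and> length w = m}"
    by (rule finite_lists_length_eq) simp
  ultimately show ?thesis by (rule finite_subset)
qed

lemma Bn_sub: assumes "is_SFT X" "u \<in> Bn X L" "p + q \<le> L"
  shows "take q (drop p u) \<in> Bn X q"
proof -
  obtain x where x: "x \<in> X" "u = word_at x 0 L" using assms(2) by (auto simp: Bn_def)
  have "take q (drop p u) = word_at ((shift ^^ p) x) 0 q"
    using x assms(3) by (simp add: take_drop_word_at word_at_shift)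
  then show ?thesis using funpow_shift_in_X[OF assms(1) x(1)] by (auto simp: Bn_def)
qed

lemma word_at_eq_iff: "word_at x a m = w \<longleftrightarrow> length w = m \<and> (\<forall>j<m. x (a + int j) = w ! j)"
proof
  assume "word_at x a m = w" then show "length w = m \<and> (\<forall>j<m. x (a + int j) = w ! j)"
    unfolding word_at_def by auto
next
  assume "length w = m \<and> (\<forall>j<m. x (a + int j) = w ! j)"
  then show "word_at x a m = w" unfolding word_at_def by (intro nth_equalityI) auto
qed

lemma cyl_meas_aux: "{x::int\<Rightarrow>'a. word_at x 0 (length w) = w} \<in> sets shift_space"
proof -
  have eq: "{x::int\<Rightarrow>'a. word_at x 0 (length w) = w} = (\<Inter>j\<in>{..<length w}. {x. x (int j) = w ! j})"
    by (auto simp: word_at_eq_iff)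
  have sp: "space shift_space = (UNIV :: (int\<Rightarrow>'a) set)"
    by (simp add: shift_space_def space_PiM)
  have "{x::int\<Rightarrow>'a. x (int j) = w ! j} \<in> sets shift_space" for j
  proof -
    have "(\<lambda>x::int\<Rightarrow>'a. x (int j)) \<in> measurable shift_space (count_space UNIV)"
      unfolding shift_space_def by (rule measurable_component_singleton) simp
    then have "(\<lambda>x::int\<Rightarrow>'a. x (int j)) -` {w!j} \<inter> space shift_space \<in> sets shift_space"
      by (rule measurable_sets) simp
    then show ?thesis by (simp add: vimage_def sp)
  qed
  then have "(\<Inter>j\<in>{..<length w}. {x::int\<Rightarrow>'a. x (int j) = w ! j}) \<in> sets shift_space" if "length w > 0"
    using that by (intro sets.finite_INT) auto
  moreover have "length w = 0 \<Longrightarrow> {x::int\<Rightarrow>'a. word_at x 0 (length w) = w} = space shift_space"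
    by (simp add: sp word_at_def)
  ultimately show ?thesis unfolding eq
    by (metis eq gr0I sets.top)
qed

locale rs =
  fixes X :: "(int \<Rightarrow> 'a::finite) set" and f :: "(int \<Rightarrow> 'a) \<Rightarrow> real"
    and M :: "(int \<Rightarrow> 'a) measure" and P K :: real
  assumes SFT: "is_SFT X"
    and inv: "inv_prob_on X M"
    and K1: "K > 1"
    and gibbs: "\<forall>m\<ge>1. \<forall>x\<in>X.
        1 / K \<le> mu M X (word_at x 0 m) / exp (- P * real m + birkhoff f m x) \<and>
        mu M X (word_at x 0 m) / exp (- P * real m + birkhoff f m x) \<le> K"
    and quasi_mult: "\<forall>u v. u @ v \<in> lang X \<longrightarrow>
        mu M X (u @ v) \<le> K * mu M X u * mu M X v \<and>
        measure M (cyl X u \<inter> (shift ^^ length u) -` cyl X v) / mu M X u \<le> K * mu M X v"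
begin

abbreviation "\<mu> \<equiv> mu M X"

lemma prob: "prob_space M" using inv unfolding inv_prob_on_def by blast
lemma setsM: "sets M = sets shift_space" using inv unfolding inv_prob_on_def by blast
lemma X_sets: "X \<in> sets M" using inv unfolding inv_prob_on_def by blast
lemma X_meas: "measure M X = 1" using inv unfolding inv_prob_on_def by blast

lemma cyl_sets: "cyl X w \<in> sets M"
proof -
  have "cyl X w = X \<inter> {x. word_at x 0 (length w) = w}" by (auto simp: cyl_def)
  then show ?thesis using X_sets cyl_meas_aux[of w] setsM by auto
qed

lemma mu_nonneg: "\<mu> w \<ge> 0" by (simp add: mu_def)

lemma mu_le1: "\<mu> w \<le> 1"
  unfolding mu_def using prob by (simp add: prob_space.prob_le_1)

lemma mu_Nil: "\<mu> [] = 1"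
proof -
  have "cyl X [] = X" by (auto simp: cyl_def word_at_def)
  then show ?thesis using X_meas by (simp add: mu_def)
qed

lemma cyl_empty: assumes "w \<notin> Bn X (length w)" shows "cyl X w = {}"
proof -
  have "x \<notin> cyl X w" for x
  proof
    assume "x \<in> cyl X w"
    then have "x \<in> X" "word_at x 0 (length w) = w" by (auto simp: cyl_def)
    then have "w \<in> Bn X (length w)" unfolding Bn_def by (metis image_eqI)
    then show False using assms by simp
  qed
  then show ?thesis by blast
qed

lemma mu_notin: "w \<notin> Bn X (length w) \<Longrightarrow> \<mu> w = 0"
  by (simp add: mu_def cyl_empty)

lemma sum_mu_eq_measure: assumes "S \<subseteq> Bn X m"
  shows "(\<Sum>w\<in>S. \<mu> w) = measure M (\<Union>w\<in>S. cyl X w)"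
proof -
  have fin: "finite S" using assms Bn_finite finite_subset by blast
  have "disjoint_family_on (cyl X) S"
  proof (unfold disjoint_family_on_def, intro ballI impI)
    fix a b assume ab: "a \<in> S" "b \<in> S" "a \<noteq> b"
    then have "length a = m" "length b = m" using assms Bn_length by blast+
    then show "cyl X a \<inter> cyl X b = {}" using ab(3) by (auto simp: cyl_def)
  qed
  moreover have "finite_measure M" by (rule prob_space.finite_measure[OF prob])
  ultimately show ?thesis unfolding mu_def
    using finite_measure.finite_measure_finite_Union[of M S "cyl X"] fin cyl_sets
    by (metis (no_types, lifting) image_subsetI)
qed

lemma cyl_cover: "(\<Union>w\<in>Bn X m. cyl X w) = X"
  by (auto simp: cyl_def Bn_def)

lemma sum_mu_Bn: "(\<Sum>w\<in>Bn X m. \<mu> w) = 1"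
  using sum_mu_eq_measure[of "Bn X m" m] cyl_cover X_meas by simp

lemma sum_mu_le1: assumes "S \<subseteq> Bn X m" shows "(\<Sum>w\<in>S. \<mu> w) \<le> 1"
proof -
  have "(\<Sum>w\<in>S. \<mu> w) \<le> (\<Sum>w\<in>Bn X m. \<mu> w)"
    using assms Bn_finite by (intro sum_mono2) (auto simp: mu_nonneg)
  then show ?thesis using sum_mu_Bn by simp
qed

lemma gibbs_le: assumes "m \<ge> 1" "x \<in> X"
  shows "\<mu> (word_at x 0 m) \<le> K * exp (- P * real m + birkhoff f m x)"
    and "exp (- P * real m + birkhoff f m x) \<le> K * \<mu> (word_at x 0 m)"
proof -
  have g: "1 / K \<le> \<mu> (word_at x 0 m) / exp (- P * real m + birkhoff f m x)"
      "\<mu> (word_at x 0 m) / exp (- P * real m + birkhoff f m x) \<le> K"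
    using gibbs assms by blast+
  show "\<mu> (word_at x 0 m) \<le> K * exp (- P * real m + birkhoff f m x)"
    using g(2) by (simp add: pos_divide_le_eq)
  show "exp (- P * real m + birkhoff f m x) \<le> K * \<mu> (word_at x 0 m)"
  proof -
    have "1 / K * exp (- P * real m + birkhoff f m x) \<le> \<mu> (word_at x 0 m)"
      using g(1) by (simp add: pos_le_divide_eq)
    then show ?thesis using K1 by (simp add: divide_le_eq mult.commute)
  qed
qed

lemma mu_pos: assumes "w \<in> Bn X m" shows "\<mu> w > 0"
proof (cases "m = 0")
  case True then show ?thesis using assms Bn_length[OF assms] mu_Nil by simp
next
  case False
  obtain x where x: "x \<in> X" "w = word_at x 0 m" using assms by (auto simp: Bn_def)
  have "0 < exp (- P * real m + birkhoff f m x)" by simp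
  also have "\<dots> \<le> K * \<mu> w" using gibbs_le(2)[of m x] x False by simp
  finally show ?thesis using K1 by (simp add: zero_less_mult_iff)
qed

lemma Smf_bounds: assumes "w \<in> Bn X m" "m \<ge> 1"
  shows "exp (Smf X f w) \<le> K * exp (P * real m) * \<mu> w"
    and "exp (P * real m) * \<mu> w \<le> K * exp (Smf X f w)"
proof -
  have lw: "length w = m" using Bn_length[OF assms(1)] .
  obtain x0 where x0: "x0 \<in> X" "w = word_at x0 0 m" using assms by (auto simp: Bn_def)
  have x0c: "x0 \<in> cyl X w" using x0 by (simp add: cyl_def)
  have mp: "\<mu> w > 0" using mu_pos[OF assms(1)] .
  have ub: "birkhoff f m x \<le> ln (K * exp (P * real m) * \<mu> w)" if "x \<in> cyl X w" for x
  proof -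
    have x: "x \<in> X" "word_at x 0 m = w" using that lw by (auto simp: cyl_def)
    have "exp (- P * real m + birkhoff f m x) \<le> K * \<mu> w" using gibbs_le(2)[OF assms(2) x(1)] x by simp
    then have "exp (birkhoff f m x) / exp (P * real m) \<le> K * \<mu> w"
      by (simp add: exp_diff)
    then have "exp (birkhoff f m x) \<le> K * exp (P * real m) * \<mu> w"
      by (simp add: pos_divide_le_eq mult_ac)
    then show ?thesis using K1 mp by (simp add: ln_ge_iff)
  qed
  have bdd: "bdd_above (birkhoff f m ` cyl X w)" using ub by (intro bdd_aboveI[of _ "ln (K * exp (P * real m) * \<mu> w)"]) auto
  have S_le: "Smf X f w \<le> ln (K * exp (P * real m) * \<mu> w)"
    unfolding Smf_def lw using x0c ub by (intro cSup_least) auto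
  have S_ge: "birkhoff f m x0 \<le> Smf X f w"
    unfolding Smf_def lw using x0c bdd by (intro cSup_upper) auto
  show "exp (Smf X f w) \<le> K * exp (P * real m) * \<mu> w"
  proof -
    have pos: "K * exp (P * real m) * \<mu> w > 0" using K1 mp by simp
    have "exp (Smf X f w) \<le> exp (ln (K * exp (P * real m) * \<mu> w))"
      using S_le by (simp only: exp_le_cancel_iff)
    also have "\<dots> = K * exp (P * real m) * \<mu> w" using pos by (rule exp_ln)
    finally show ?thesis .
  qed
  have "\<mu> w \<le> K * exp (- P * real m + birkhoff f m x0)" using gibbs_le(1)[OF assms(2) x0(1)] x0 by simp
  also have "\<dots> \<le> K * exp (- P * real m + Smf X f w)" using S_ge K1 by simp
  finally have "\<mu> w \<le> K * (exp (Smf X f w) / exp (P * real m))"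
    by (simp add: exp_diff)
  then show "exp (P * real m) * \<mu> w \<le> K * exp (Smf X f w)"
    by (simp add: field_simps)
qed

end

lemma exp_indicator_prod:
  fixes A W :: "'b set" and \<alpha> :: real
  assumes fin: "finite A" and WA: "W \<subseteq> A" and a0: "0 \<le> \<alpha>" and a1: "\<alpha> \<le> 1"
  shows "measure_pmf.expectation (Pi_pmf A False (\<lambda>_. bernoulli_pmf (1 - \<alpha>)))
           (\<lambda>b. if W \<inter> {w\<in>A. b w} = {} then 1 else 0 :: real) = \<alpha> ^ card W"
proof -
  define g :: "'b \<Rightarrow> bool \<Rightarrow> real" where "g = (\<lambda>w v. if w \<in> W \<and> v then 0 else 1)"
  have eq: "(if W \<inter> {w\<in>A. b w} = {} then 1 else 0 :: real) = (\<Prod>w\<in>A. g w (b w))" for b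
  proof (cases "\<exists>w\<in>W. b w")
    case True
    then obtain w where w: "w \<in> W" "b w" by blast
    then have "(\<Prod>w\<in>A. g w (b w)) = 0" using WA fin by (intro prod_zero) (auto simp: g_def)
    then show ?thesis using w WA by auto
  next
    case False
    then have "(\<Prod>w\<in>A. g w (b w)) = 1" by (intro prod.neutral) (auto simp: g_def)
    then show ?thesis using False by auto
  qed
  have "measure_pmf.expectation (Pi_pmf A False (\<lambda>_. bernoulli_pmf (1 - \<alpha>)))
           (\<lambda>b. if W \<inter> {w\<in>A. b w} = {} then 1 else 0 :: real)
      = measure_pmf.expectation (Pi_pmf A False (\<lambda>_. bernoulli_pmf (1 - \<alpha>))) (\<lambda>b. \<Prod>w\<in>A. g w (b w))"
    by (simp only: eq)
  also have "\<dots> = (\<Prod>w\<in>A. measure_pmf.expectation (bernoulli_pmf (1 - \<alpha>)) (\<lambda>v. g w v))"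
    using fin by (intro expectation_prod_Pi_pmf) (auto simp: g_def intro!: integrable_measure_pmf_finite)
  also have "\<dots> = (\<Prod>w\<in>A. if w \<in> W then \<alpha> else 1)"
    using a0 a1 by (intro prod.cong refl) (simp add: integral_bernoulli_pmf g_def)
  also have "\<dots> = \<alpha> ^ card W"
    using fin WA by (simp add: prod.If_cases Int_absorb1 Int_commute)
  finally show ?thesis .
qed

lemma subwords_eq: "subwords n u = (\<lambda>i. take n (drop i u)) ` {i. i + n \<le> length u}"
  by (auto simp: subwords_def)

lemma subwords_sub: assumes "is_SFT X" "u \<in> Bn X k" shows "subwords n u \<subseteq> Bn X n"
  using Bn_sub[OF assms(1,2)] Bn_length[OF assms(2)] by (auto simp: subwords_def)

lemma card_subwords_le: assumes "n \<le> length u" shows "card (subwords n u) \<le> length u - n + 1"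
proof -
  have e: "{i. i + n \<le> length u} = {..length u - n}" using assms by auto
  have "card (subwords n u) \<le> card {..length u - n}"
    unfolding subwords_eq e by (rule card_image_le) simp
  then show ?thesis by simp
qed

context rs begin

lemma Smf_lower: assumes "w \<in> Bn X m"
  shows "exp (P * real m) * \<mu> w \<le> K * exp (Smf X f w)"
proof (cases "m = 0")
  case True
  then have w: "w = []" using Bn_length[OF assms] by simp
  have "X \<noteq> {}" using assms by (auto simp: Bn_def)
  then have "birkhoff f 0 ` cyl X [] = {0}" by (auto simp: birkhoff_def cyl_def word_at_def)
  then have "Smf X f w = 0" using w by (simp add: Smf_def)
  then show ?thesis using True w mu_Nil K1 by simp
next
  case False then show ?thesis using Smf_bounds(2)[OF assms] by simp
qed

lemma expected_psi_eq:
  assumes a0: "0 \<le> \<alpha>" and a1: "\<alpha> \<le> 1" and nk: "n \<le> k"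
  shows "expected_psi M X f \<delta> \<alpha> n k = (1 / real (card (E_set M X \<delta> n))) *
     (\<Sum>u\<in>G_set M X \<delta> n k. exp (Smf X f u) * \<alpha> ^ card (subwords n u))"
proof -
  let ?p = "Pi_pmf (Bn X n) False (\<lambda>_. bernoulli_pmf (1 - \<alpha>))"
  have finG: "finite (G_set M X \<delta> n k)"
    by (rule finite_subset[OF _ Bn_finite[of X k]]) (auto simp: G_set_def)
  have int: "integrable ?p h" for h :: "_ \<Rightarrow> real"
    by (intro integrable_measure_pmf_finite) (simp add: set_Pi_pmf Bn_finite finite_PiE_dflt)
  have xi: "measure_pmf.expectation ?p (\<lambda>b. xi n {w \<in> Bn X n. b w} u) = \<alpha> ^ card (subwords n u)"
    if "u \<in> G_set M X \<delta> n k" for u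
  proof -
    have "u \<in> Bn X k" using that by (simp add: G_set_def)
    then have "subwords n u \<subseteq> Bn X n" using subwords_sub[OF SFT] by blast
    then show ?thesis unfolding xi_def
      by (rule exp_indicator_prod[OF Bn_finite _ a0 a1])
  qed
  have "expected_psi M X f \<delta> \<alpha> n k = measure_pmf.expectation ?p
      (\<lambda>b. (1 / real (card (E_set M X \<delta> n))) *
        (\<Sum>u\<in>G_set M X \<delta> n k. exp (Smf X f u) * xi n {w \<in> Bn X n. b w} u))"
    by (simp add: expected_psi_def psi_def)
  also have "\<dots> = (1 / real (card (E_set M X \<delta> n))) *
      (\<Sum>u\<in>G_set M X \<delta> n k. exp (Smf X f u) * measure_pmf.expectation ?p (\<lambda>b. xi n {w \<in> Bn X n. b w} u))"
    using int finG by (simp add: Bochner_Integration.integral_sum)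
  also have "\<dots> = (1 / real (card (E_set M X \<delta> n))) *
     (\<Sum>u\<in>G_set M X \<delta> n k. exp (Smf X f u) * \<alpha> ^ card (subwords n u))"
    using xi by simp
  finally show ?thesis .
qed

lemma first_claim:
  assumes a0: "0 < \<alpha>" and a1: "\<alpha> \<le> 1" and nk: "n \<le> k"
  shows "expected_psi M X f \<delta> \<alpha> n k \<ge>
            (1 / real (card (E_set M X \<delta> n))) * (1 / K) * \<alpha> ^ (k - n + 1) * exp (P * real k) *
            measure M (\<Union>u\<in>G_set M X \<delta> n k. cyl X u)"
proof -
  have GB: "G_set M X \<delta> n k \<subseteq> Bn X k" by (auto simp: G_set_def)
  have trm: "(1 / K) * \<alpha> ^ (k - n + 1) * exp (P * real k) * \<mu> u \<le> exp (Smf X f u) * \<alpha> ^ card (subwords n u)"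
    if "u \<in> G_set M X \<delta> n k" for u
  proof -
    have uB: "u \<in> Bn X k" using that GB by blast
    have "card (subwords n u) \<le> k - n + 1" using card_subwords_le[of n u] Bn_length[OF uB] nk by simp
    then have A: "\<alpha> ^ (k - n + 1) \<le> \<alpha> ^ card (subwords n u)"
      using a0 a1 by (intro power_decreasing) auto
    have B: "(1 / K) * exp (P * real k) * \<mu> u \<le> exp (Smf X f u)"
      using Smf_lower[OF uB] K1 by (simp add: field_simps)
    have "(1 / K) * \<alpha> ^ (k - n + 1) * exp (P * real k) * \<mu> u = ((1 / K) * exp (P * real k) * \<mu> u) * \<alpha> ^ (k - n + 1)"
      by simp
    also have "\<dots> \<le> exp (Smf X f u) * \<alpha> ^ card (subwords n u)"
      using A B a0 K1 mu_nonneg by (intro mult_mono) auto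
    finally show ?thesis .
  qed
  have "(1 / K) * \<alpha> ^ (k - n + 1) * exp (P * real k) * measure M (\<Union>u\<in>G_set M X \<delta> n k. cyl X u)
      = (\<Sum>u\<in>G_set M X \<delta> n k. (1 / K) * \<alpha> ^ (k - n + 1) * exp (P * real k) * \<mu> u)"
    using sum_mu_eq_measure[OF GB] by (simp only: sum_distrib_left[symmetric])
  also have "\<dots> \<le> (\<Sum>u\<in>G_set M X \<delta> n k. exp (Smf X f u) * \<alpha> ^ card (subwords n u))"
    using trm by (intro sum_mono) auto
  finally have "(1 / K) * \<alpha> ^ (k - n + 1) * exp (P * real k) * measure M (\<Union>u\<in>G_set M X \<delta> n k. cyl X u)
      \<le> (\<Sum>u\<in>G_set M X \<delta> n k. exp (Smf X f u) * \<alpha> ^ card (subwords n u))" .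
  then have "(1 / real (card (E_set M X \<delta> n))) * ((1 / K) * \<alpha> ^ (k - n + 1) * exp (P * real k) * measure M (\<Union>u\<in>G_set M X \<delta> n k. cyl X u))
      \<le> (1 / real (card (E_set M X \<delta> n))) * (\<Sum>u\<in>G_set M X \<delta> n k. exp (Smf X f u) * \<alpha> ^ card (subwords n u))"
    by (intro mult_left_mono) auto
  then show ?thesis using expected_psi_eq[of \<alpha> n k] a0 a1 nk by (simp add: mult_ac)
qed

end

definition win :: "nat \<Rightarrow> 'b list \<Rightarrow> nat \<Rightarrow> 'b list" where "win n u i = take n (drop i u)"
definition rep :: "nat \<Rightarrow> 'b list \<Rightarrow> nat set" where
  "rep n u = {i. i + n \<le> length u \<and> (\<exists>j<i. win n u j = win n u i)}"
definition sep :: "nat \<Rightarrow> nat set \<Rightarrow> bool" where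
  "sep n T \<longleftrightarrow> (\<forall>p\<in>T. \<forall>q\<in>T. p < q \<longrightarrow> p + n \<le> q)"

lemma card_subwords_rep: assumes "n \<le> length u"
  shows "length u - n + 1 \<le> card (subwords n u) + card (rep n u)"
proof -
  define Pos where "Pos = {i. i + n \<le> length u}"
  have PosE: "Pos = {..length u - n}" using assms by (auto simp: Pos_def)
  have finP: "finite Pos" by (simp add: PosE)
  have rP: "rep n u \<subseteq> Pos" by (auto simp: rep_def Pos_def)
  define N where "N = Pos - rep n u"
  have inj: "inj_on (win n u) N"
  proof (rule inj_onI)
    fix i i' assume i: "i \<in> N" "i' \<in> N" "win n u i = win n u i'"
    show "i = i'"
    proof (rule ccontr)
      assume "i \<noteq> i'"
      then consider "i < i'" | "i' < i" by linarith
      then show False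
      proof cases
        case 1 then have "i' \<in> rep n u" using i by (auto simp: rep_def N_def Pos_def)
        then show False using i by (auto simp: N_def)
      next
        case 2 then have "i \<in> rep n u" using i by (auto simp: rep_def N_def Pos_def)
        then show False using i by (auto simp: N_def)
      qed
    qed
  qed
  have "win n u ` N \<subseteq> subwords n u" by (auto simp: subwords_def win_def N_def Pos_def)
  then have "card (win n u ` N) \<le> card (subwords n u)"
    by (intro card_mono) (auto simp: subwords_eq Pos_def[symmetric] finP)
  then have "card N \<le> card (subwords n u)" using card_image[OF inj] by simp
  moreover have "card N = card Pos - card (rep n u)"
    unfolding N_def using rP finP by (simp add: card_Diff_subset finite_subset)
  moreover have "card (rep n u) \<le> card Pos" using rP finP by (simp add: card_mono)
  moreover have "card Pos = length u - n + 1" by (simp add: PosE)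
  ultimately show ?thesis by linarith
qed

lemma greedy: assumes "finite R" "n \<ge> 1" shows "\<exists>T\<subseteq>R. sep n T \<and> card R \<le> n * card T"
  using assms(1)
proof (induction "card R" arbitrary: R rule: less_induct)
  case less
  show ?case
  proof (cases "R = {}")
    case True then show ?thesis by (auto simp: sep_def)
  next
    case False
    define p where "p = Min R"
    have pR: "p \<in> R" using False less.prems by (simp add: p_def)
    have pmin: "\<And>r. r \<in> R \<Longrightarrow> p \<le> r" using less.prems by (simp add: p_def)
    define R' where "R' = {r\<in>R. p + n \<le> r}"
    have R'sub: "R' \<subseteq> R" by (auto simp: R'_def)
    have pR': "p \<notin> R'" using assms(2) by (auto simp: R'_def)
    have finR': "finite R'" using less.prems R'sub finite_subset by blast
    have "card R' < card R" using R'sub pR pR' less.prems by (metis psubsetI psubset_card_mono)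
    then obtain T' where T': "T' \<subseteq> R'" "sep n T'" "card R' \<le> n * card T'"
      using less.hyps finR' by blast
    define T where "T = insert p T'"
    have pT': "p \<notin> T'" using T'(1) pR' by blast
    have finT': "finite T'" using T'(1) finR' finite_subset by blast
    have sepT: "sep n T"
      unfolding sep_def T_def
    proof (intro ballI impI)
      fix a b assume ab: "a \<in> insert p T'" "b \<in> insert p T'" "a < b"
      show "a + n \<le> b"
      proof (cases "a = p")
        case True then show ?thesis using ab T'(1) by (auto simp: R'_def)
      next
        case False
        then have aT: "a \<in> T'" using ab by auto
        then have "p + n \<le> a" using T'(1) by (auto simp: R'_def)
        then have "b \<noteq> p" using ab by auto
        then have "b \<in> T'" using ab by auto
        then show ?thesis using aT ab T'(2) by (auto simp: sep_def)
      qed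
    qed
    have "R \<subseteq> R' \<union> {p..<p+n}" using pmin by (auto simp: R'_def)
    then have "card R \<le> card (R' \<union> {p..<p+n})" using finR' by (intro card_mono) auto
    also have "\<dots> \<le> card R' + card {p..<p+n}" by (rule card_Un_le)
    also have "\<dots> \<le> n * card T' + n" using T'(3) by simp
    also have "\<dots> = n * card T" using pT' finT' by (simp add: T_def)
    finally have cR: "card R \<le> n * card T" .
    have "T \<subseteq> R" using T'(1) R'sub pR by (auto simp: T_def)
    then show ?thesis using sepT cR by blast
  qed
qed

lemma copy_unique:
  assumes "length v = p" "j < p" "length b = n" "length b' = n"
    "b = take n (drop j (v @ b))" "b' = take n (drop j (v @ b'))"
  shows "b = b'"
proof -
  have "\<forall>i<n. b ! i = b' ! i"
  proof (intro allI)
    fix i show "i < n \<longrightarrow> b ! i = b' ! i"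
    proof (induction i rule: less_induct)
      case (less i)
      show ?case
      proof
        assume i: "i < n"
        have jl: "j \<le> length (v @ b)" "j \<le> length (v @ b')" using assms(1,2) by simp_all
        have "b ! i = take n (drop j (v @ b)) ! i" using assms(5) by simp
        also have "\<dots> = drop j (v @ b) ! i" using i by (simp only: nth_take)
        also have "\<dots> = (v @ b) ! (j + i)" using jl(1) by (rule nth_drop)
        finally have b1: "b ! i = (v @ b) ! (j + i)" .
        have "b' ! i = take n (drop j (v @ b')) ! i" using assms(6) by simp
        also have "\<dots> = drop j (v @ b') ! i" using i by (simp only: nth_take)
        also have "\<dots> = (v @ b') ! (j + i)" using jl(2) by (rule nth_drop)
        finally have b2: "b' ! i = (v @ b') ! (j + i)" .
        show "b ! i = b' ! i"
        proof (cases "j + i < p")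
          case True then show ?thesis using b1 b2 assms(1) by (simp add: nth_append)
        next
          case False
          then have "b ! i = b ! (j + i - p)" "b' ! i = b' ! (j + i - p)"
            using b1 b2 assms(1) by (simp_all add: nth_append)
          moreover have "j + i - p < i" using False assms(2) by linarith
          ultimately show ?thesis using less i by auto
        qed
      qed
    qed
  qed
  then show ?thesis using assms(3,4) by (simp add: list_eq_iff_nth_eq)
qed

lemma sum_card_le1:
  fixes g :: "'b \<Rightarrow> real"
  assumes "finite A" "\<forall>a\<in>A. \<forall>b\<in>A. a = b" "\<forall>b\<in>A. g b \<le> c" "0 \<le> c"
  shows "sum g A \<le> c"
proof (cases "A = {}")
  case True then show ?thesis using assms by simp
next
  case False
  then obtain a where "a \<in> A" by blast
  then have "A = {a}" using assms(2) by blast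
  then show ?thesis using assms(3) by simp
qed

context rs begin

lemma lang_Bn: "u \<in> Bn X m \<Longrightarrow> u \<in> lang X" by (auto simp: lang_def)

lemma mu_split3: assumes "v @ b @ w \<in> Bn X L"
  shows "\<mu> (v @ b @ w) \<le> K^2 * \<mu> v * \<mu> b * \<mu> w"
proof -
  have L: "length (v @ b @ w) = L" using Bn_length[OF assms] .
  have "take (length v + length b) (drop 0 (v @ b @ w)) \<in> Bn X (length v + length b)"
    using Bn_sub[OF SFT assms, of 0 "length v + length b"] L by simp
  then have vb: "v @ b \<in> lang X" by (simp add: lang_Bn)
  have "(v @ b) @ w \<in> lang X" using lang_Bn[OF assms] by simp
  then have "\<mu> ((v @ b) @ w) \<le> K * \<mu> (v @ b) * \<mu> w" using quasi_mult by blast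
  also have "\<dots> \<le> K * (K * \<mu> v * \<mu> b) * \<mu> w"
    using quasi_mult vb K1 mu_nonneg by (intro mult_right_mono mult_left_mono) auto
  finally show ?thesis by (simp add: power2_eq_square mult_ac)
qed

lemma core:
  assumes gam: "\<forall>b\<in>Bn X n. \<mu> b \<le> \<gamma>^n" and g0: "0 \<le> \<gamma>"
  shows "finite T \<Longrightarrow> sep n T \<Longrightarrow> (\<forall>p\<in>T. p + n \<le> L \<and> J p < p) \<Longrightarrow>
    (\<Sum>u\<in>{u\<in>Bn X L. \<forall>p\<in>T. win n u p = win n u (J p)}. \<mu> u) \<le> (K^2 * \<gamma>^n)^card T"
proof (induction "card T" arbitrary: T L rule: less_induct)
  case less
  show ?case
  proof (cases "T = {}")
    case True
    have "(\<Sum>u\<in>{u\<in>Bn X L. \<forall>p\<in>T. win n u p = win n u (J p)}. \<mu> u) \<le> 1"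
      by (rule sum_mu_le1[of _ L]) auto
    then show ?thesis using True by simp
  next
    case False
    define p where "p = Max T"
    have pT: "p \<in> T" using False less.prems(1) by (simp add: p_def)
    define T' where "T' = T - {p}"
    have finT': "finite T'" using less.prems(1) by (simp add: T'_def)
    have "card T > 0" using pT less.prems(1) card_gt_0_iff by blast
    then have cT': "card T' < card T" using pT less.prems(1) by (simp add: T'_def)
    have cT: "card T = Suc (card T')" using pT less.prems(1) \<open>card T > 0\<close> by (simp add: T'_def)
    have sepT': "sep n T'" using less.prems(2) by (auto simp: sep_def T'_def)
    have qp: "q + n \<le> p" if "q \<in> T'" for q
    proof -
      have "q \<le> p" "q \<noteq> p" "q \<in> T" using that less.prems(1) by (auto simp: T'_def p_def)
      then show ?thesis using less.prems(2) pT by (auto simp: sep_def)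
    qed
    have T'c: "\<forall>q\<in>T'. q + n \<le> p \<and> J q < q" using qp less.prems(3) by (auto simp: T'_def)
    have pL: "p + n \<le> L" and Jp: "J p < p" using less.prems(3) pT by auto
    define V where "V = {v\<in>Bn X p. \<forall>q\<in>T'. win n v q = win n v (J q)}"
    have IH: "(\<Sum>v\<in>V. \<mu> v) \<le> (K^2 * \<gamma>^n)^card T'"
      unfolding V_def using less.hyps[OF cT' finT' sepT' T'c] by simp
    define Cv where "Cv = (\<lambda>v. {b\<in>Bn X n. b = take n (drop (J p) (v @ b))})"
    define Wd where "Wd = Bn X (L - p - n)"
    define S where "S = {u\<in>Bn X L. \<forall>p\<in>T. win n u p = win n u (J p)}"
    define \<phi> where "\<phi> = (\<lambda>u::'a list. (take p u, take n (drop p u), drop (p + n) u))"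
    have finBig: "finite (Sigma V (\<lambda>v. Cv v \<times> Wd))"
      by (intro finite_SigmaI finite_cartesian_product finite_subset[OF _ Bn_finite])
         (auto simp: V_def Cv_def Wd_def)
    have uprop: "take p u \<in> V \<and> take n (drop p u) \<in> Cv (take p u) \<and> drop (p + n) u \<in> Wd
       \<and> u = take p u @ take n (drop p u) @ drop (p + n) u" if uS: "u \<in> S" for u
    proof -
      have uB: "u \<in> Bn X L" and cond: "\<forall>p\<in>T. win n u p = win n u (J p)" using uS by (auto simp: S_def)
      have lu: "length u = L" using Bn_length[OF uB] .
      have vB: "take p u \<in> Bn X p" using Bn_sub[OF SFT uB, of 0 p] pL by simp
      have "win n (take p u) q = win n u q" if "q + n \<le> p" for q
        using that by (simp add: win_def take_drop min_def)
      have "\<forall>q\<in>T'. win n (take p u) q = win n (take p u) (J q)"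
      proof
        fix q assume qT: "q \<in> T'"
        then have a: "q + n \<le> p" "J q + n \<le> p" using T'c by force+
        have "q \<in> T" using qT by (simp add: T'_def)
        then have "win n u q = win n u (J q)" using cond by blast
        then show "win n (take p u) q = win n (take p u) (J q)"
          using a \<open>\<And>q. q + n \<le> p \<Longrightarrow> win n (take p u) q = win n u q\<close> by metis
      qed
      then have V: "take p u \<in> V" using vB by (simp add: V_def)
      have bB: "take n (drop p u) \<in> Bn X n" using Bn_sub[OF SFT uB pL] .
      have "take n (drop p u) = take n (drop (J p) u)" using cond pT by (simp add: win_def)
      also have "\<dots> = take n (drop (J p) (take p u @ take n (drop p u)))"
      proof -
        have "take p u @ take n (drop p u) = take (p + n) u" by (simp add: take_add)
        then show ?thesis using Jp by (simp add: take_drop min_def)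
      qed
      finally have C: "take n (drop p u) \<in> Cv (take p u)" using bB by (simp add: Cv_def)
      have W: "drop (p + n) u \<in> Wd"
        using Bn_sub[OF SFT uB, of "p + n" "L - p - n"] pL lu by (simp add: Wd_def)
      have "u = take p u @ take n (drop p u) @ drop (p + n) u"
        by (metis append_take_drop_id drop_drop add.commute)
      then show ?thesis using V C W by blast
    qed
    have inj: "inj_on \<phi> S"
      by (rule inj_onI) (metis uprop \<phi>_def prod.inject)
    have "(\<Sum>u\<in>S. \<mu> u) \<le> (\<Sum>u\<in>S. (\<lambda>(v, b, w). K^2 * \<mu> v * \<mu> b * \<mu> w) (\<phi> u))"
    proof (rule sum_mono)
      fix u assume "u \<in> S"
      then have e: "u = take p u @ take n (drop p u) @ drop (p + n) u" and uB: "u \<in> Bn X L"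
        using uprop by (auto simp: S_def)
      have "\<mu> u \<le> K^2 * \<mu> (take p u) * \<mu> (take n (drop p u)) * \<mu> (drop (p + n) u)"
        using mu_split3[of "take p u" "take n (drop p u)" "drop (p + n) u" L] e uB by simp
      then show "\<mu> u \<le> (\<lambda>(v, b, w). K^2 * \<mu> v * \<mu> b * \<mu> w) (\<phi> u)" by (simp add: \<phi>_def)
    qed
    also have "\<dots> = (\<Sum>t\<in>\<phi> ` S. (\<lambda>(v, b, w). K^2 * \<mu> v * \<mu> b * \<mu> w) t)"
      using inj by (simp add: sum.reindex)
    also have "\<dots> \<le> (\<Sum>t\<in>Sigma V (\<lambda>v. Cv v \<times> Wd). (\<lambda>(v, b, w). K^2 * \<mu> v * \<mu> b * \<mu> w) t)"
      using uprop finBig K1 by (intro sum_mono2) (auto simp: \<phi>_def mu_nonneg)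
    also have "\<dots> = (\<Sum>v\<in>V. \<Sum>bw\<in>Cv v \<times> Wd. K^2 * \<mu> v * \<mu> (fst bw) * \<mu> (snd bw))"
      by (subst sum.Sigma[symmetric]) (auto simp: split_beta intro: finite_subset[OF _ Bn_finite]
          simp: V_def Cv_def Wd_def)
    also have "\<dots> = (\<Sum>v\<in>V. K^2 * \<mu> v * ((\<Sum>b\<in>Cv v. \<mu> b) * (\<Sum>w\<in>Wd. \<mu> w)))"
    proof (intro sum.cong refl)
      fix v
      have "(\<Sum>bw\<in>Cv v \<times> Wd. K^2 * \<mu> v * \<mu> (fst bw) * \<mu> (snd bw))
          = (\<Sum>b\<in>Cv v. \<Sum>w\<in>Wd. K^2 * \<mu> v * \<mu> b * \<mu> w)"
        by (simp add: sum.cartesian_product split_beta)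
      also have "\<dots> = K^2 * \<mu> v * ((\<Sum>b\<in>Cv v. \<mu> b) * (\<Sum>w\<in>Wd. \<mu> w))"
        by (simp add: sum_product sum_distrib_left mult_ac)
      finally show "(\<Sum>bw\<in>Cv v \<times> Wd. K^2 * \<mu> v * \<mu> (fst bw) * \<mu> (snd bw))
          = K^2 * \<mu> v * ((\<Sum>b\<in>Cv v. \<mu> b) * (\<Sum>w\<in>Wd. \<mu> w))" .
    qed
    also have "\<dots> \<le> (\<Sum>v\<in>V. K^2 * \<mu> v * (\<gamma>^n * 1))"
    proof (intro sum_mono mult_left_mono mult_mono)
      fix v assume vV: "v \<in> V"
      have lv: "length v = p" using vV Bn_length by (auto simp: V_def)
      show "(\<Sum>b\<in>Cv v. \<mu> b) \<le> \<gamma>^n"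
      proof (rule sum_card_le1)
        show "finite (Cv v)" by (rule finite_subset[OF _ Bn_finite]) (auto simp: Cv_def)
        show "\<forall>a\<in>Cv v. \<forall>b\<in>Cv v. a = b"
        proof (intro ballI)
          fix a b assume ab: "a \<in> Cv v" "b \<in> Cv v"
          then have "a \<in> Bn X n" "b \<in> Bn X n" "a = take n (drop (J p) (v @ a))" "b = take n (drop (J p) (v @ b))"
            by (simp_all add: Cv_def)
          then show "a = b" using copy_unique[OF lv Jp, of a n b] Bn_length by blast
        qed
        show "\<forall>b\<in>Cv v. \<mu> b \<le> \<gamma> ^ n" using gam by (auto simp: Cv_def)
        show "0 \<le> \<gamma>^n" using g0 by simp
      qed
      show "(\<Sum>w\<in>Wd. \<mu> w) \<le> 1" unfolding Wd_def by (rule sum_mu_le1) (rule order_refl)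
      show "0 \<le> \<gamma>^n" using g0 by simp
      show "0 \<le> (\<Sum>w\<in>Wd. \<mu> w)" by (intro sum_nonneg) (simp add: mu_nonneg)
      show "0 \<le> K^2 * \<mu> v" using mu_nonneg by simp
    qed
    also have "\<dots> = K^2 * \<gamma>^n * (\<Sum>v\<in>V. \<mu> v)"
      by (simp add: sum_distrib_left sum_distrib_right mult_ac)
    also have "\<dots> \<le> K^2 * \<gamma>^n * (K^2 * \<gamma>^n)^card T'"
      using IH g0 by (intro mult_left_mono) auto
    also have "\<dots> = (K^2 * \<gamma>^n)^card T" using cT by simp
    finally show ?thesis unfolding S_def .
  qed
qed

end

lemma sum_pow_card: "finite A \<Longrightarrow> (\<Sum>T\<in>Pow A. (x::real) ^ card T) = (1 + x) ^ card A"
proof (induction A rule: finite_induct)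
  case empty then show ?case by simp
next
  case (insert a A)
  have PI: "Pow (insert a A) = Pow A \<union> insert a ` Pow A" by (rule Pow_insert)
  have disj: "Pow A \<inter> insert a ` Pow A = {}" using insert.hyps by auto
  have inj: "inj_on (insert a) (Pow A)" using insert.hyps by (auto simp: inj_on_def)
  have c: "card (insert a T) = Suc (card T)" if "T \<in> Pow A" for T
    using that insert.hyps finite_subset by (metis PowD card_insert_disjoint subsetD)
  have "(\<Sum>T\<in>Pow (insert a A). x ^ card T) = (\<Sum>T\<in>Pow A. x ^ card T) + (\<Sum>T\<in>insert a ` Pow A. x ^ card T)"
    unfolding PI using insert.hyps disj by (intro sum.union_disjoint) auto
  also have "(\<Sum>T\<in>insert a ` Pow A. x ^ card T) = (\<Sum>T\<in>Pow A. x ^ card (insert a T))"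
    using inj by (simp add: sum.reindex)
  also have "\<dots> = (\<Sum>T\<in>Pow A. x * x ^ card T)" using c by (intro sum.cong) auto
  also have "(\<Sum>T\<in>Pow A. x ^ card T) + (\<Sum>T\<in>Pow A. x * x ^ card T) = (1 + x) * (1 + x) ^ card A"
    using insert.IH by (simp add: sum_distrib_left[symmetric] algebra_simps)
  finally show ?case using insert.hyps by simp
qed

context rs begin

lemma rep_bound:
  assumes gam: "\<forall>b\<in>Bn X n. \<mu> b \<le> \<gamma>^n" and g0: "0 \<le> \<gamma>"
    and finT: "finite T" and sepT: "sep n T" and TL: "\<forall>p\<in>T. p + n \<le> L"
  shows "(\<Sum>u\<in>Bn X L. if T \<subseteq> rep n u then \<mu> u else 0) \<le> (real L * (K^2 * \<gamma>^n))^card T"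
proof -
  define JS where "JS = PiE T (\<lambda>p. {..<p})"
  have finJS: "finite JS" using finT by (simp add: JS_def finite_PiE)
  have cardJS: "real (card JS) \<le> real L ^ card T"
  proof -
    have "card JS = (\<Prod>p\<in>T. p)" using finT by (simp add: JS_def card_PiE)
    also have "real (\<Prod>p\<in>T. p) = (\<Prod>p\<in>T. real p)" by simp
    also have "\<dots> \<le> (\<Prod>p\<in>T. real L)" using TL by (intro prod_mono) auto
    finally show ?thesis by simp
  qed
  define cnd where "cnd = (\<lambda>J (u::'a list). \<forall>p\<in>T. win n u p = win n u (J p))"
  have pt: "(if T \<subseteq> rep n u then \<mu> u else 0) \<le> (\<Sum>J\<in>JS. if cnd J u then \<mu> u else 0)" for u
  proof (cases "T \<subseteq> rep n u")
    case True
    define J where "J = restrict (\<lambda>p. SOME j. j < p \<and> win n u j = win n u p) T"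
    have "\<forall>p\<in>T. \<exists>j<p. win n u j = win n u p" using True by (auto simp: rep_def)
    have Jp: "\<forall>p\<in>T. J p < p \<and> win n u (J p) = win n u p"
    proof
      fix p assume pT: "p \<in> T"
      then have "\<exists>j. j < p \<and> win n u j = win n u p" using \<open>\<forall>p\<in>T. \<exists>j<p. win n u j = win n u p\<close> by blast
      then have "(SOME j. j < p \<and> win n u j = win n u p) < p \<and> win n u (SOME j. j < p \<and> win n u j = win n u p) = win n u p"
        by (rule someI_ex)
      then show "J p < p \<and> win n u (J p) = win n u p" using pT by (simp add: J_def)
    qed
    have JJ: "J \<in> JS" using Jp by (auto simp: JS_def J_def)
    have "cnd J u" using Jp by (auto simp: cnd_def)
    then have "\<mu> u = (if cnd J u then \<mu> u else 0)" by simp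
    also have "\<dots> \<le> (\<Sum>J\<in>JS. if cnd J u then \<mu> u else 0)"
      using JJ finJS by (intro member_le_sum) (auto simp: mu_nonneg)
    finally show ?thesis using True by simp
  next
    case False
    have "0 \<le> (\<Sum>J\<in>JS. if cnd J u then \<mu> u else 0)" by (intro sum_nonneg) (simp add: mu_nonneg)
    then show ?thesis using False by simp
  qed
  have "(\<Sum>u\<in>Bn X L. if T \<subseteq> rep n u then \<mu> u else 0) \<le> (\<Sum>u\<in>Bn X L. \<Sum>J\<in>JS. if cnd J u then \<mu> u else 0)"
    using pt by (intro sum_mono) auto
  also have "\<dots> = (\<Sum>J\<in>JS. \<Sum>u\<in>Bn X L. if cnd J u then \<mu> u else 0)" by (rule sum.swap)
  also have "\<dots> = (\<Sum>J\<in>JS. \<Sum>u\<in>{u\<in>Bn X L. cnd J u}. \<mu> u)"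
    by (rule sum.cong[OF refl], rule sum.inter_filter[OF Bn_finite, symmetric])
  also have "\<dots> \<le> (\<Sum>J\<in>JS. (K^2 * \<gamma>^n)^card T)"
  proof (intro sum_mono)
    fix J assume "J \<in> JS"
    then have "\<forall>p\<in>T. p + n \<le> L \<and> J p < p" using TL by (auto simp: JS_def)
    then show "(\<Sum>u\<in>{u\<in>Bn X L. cnd J u}. \<mu> u) \<le> (K^2 * \<gamma>^n)^card T"
      unfolding cnd_def using core[OF gam g0 finT sepT] by blast
  qed
  also have "\<dots> = real (card JS) * (K^2 * \<gamma>^n)^card T" by simp
  also have "\<dots> \<le> real L ^ card T * (K^2 * \<gamma>^n)^card T"
    using cardJS g0 by (intro mult_right_mono) auto
  finally show ?thesis by (simp add: power_mult_distrib)
qed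


lemma upper_sum:
  assumes gam: "\<forall>b\<in>Bn X n. \<mu> b \<le> \<gamma>^n" and g0: "0 \<le> \<gamma>"
    and a0: "0 < \<alpha>" and a1: "\<alpha> \<le> 1" and n1: "1 \<le> n" and nL: "n \<le> L"
  shows "(\<Sum>u\<in>Bn X L. \<mu> u * \<alpha> ^ card (subwords n u))
     \<le> \<alpha> ^ (L - n + 1) * (1 + real L * K^2 * (\<gamma> / \<alpha>)^n) ^ (L - n + 1)"
proof -
  define Pos where "Pos = {..L - n}"
  define l where "l = L - n + 1"
  have cPos: "card Pos = l" by (simp add: Pos_def l_def)
  have finPos: "finite Pos" by (simp add: Pos_def)
  define \<beta> where "\<beta> = 1 / \<alpha> ^ n"
  have b0: "0 \<le> \<beta>" using a0 by (simp add: \<beta>_def)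
  define h where "h = (\<lambda>T (u::'a list). if sep n T \<and> T \<subseteq> rep n u then \<beta> ^ card T else 0)"
  have pt: "\<alpha> ^ card (subwords n u) \<le> \<alpha> ^ l * (\<Sum>T\<in>Pow Pos. h T u)" if uB: "u \<in> Bn X L" for u
  proof -
    have lu: "length u = L" using Bn_length[OF uB] .
    define r where "r = card (rep n u)"
    have repPos: "rep n u \<subseteq> Pos" using lu nL by (auto simp: rep_def Pos_def)
    have finrep: "finite (rep n u)" using repPos finPos finite_subset by blast
    have rl: "r \<le> l" unfolding r_def using card_mono[OF finPos repPos] cPos by simp
    have Wr: "l - r \<le> card (subwords n u)" using card_subwords_rep[of n u] nL lu by (simp add: l_def r_def)
    obtain T where T: "T \<subseteq> rep n u" "sep n T" "r \<le> n * card T"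
      using greedy[OF finrep n1] r_def by blast
    have "\<alpha> ^ card (subwords n u) \<le> \<alpha> ^ (l - r)" using Wr a0 a1 by (intro power_decreasing) auto
    also have "\<alpha> ^ (l - r) = \<alpha> ^ l / \<alpha> ^ r"
      using rl a0 by (simp add: power_diff)
    also have "\<dots> \<le> \<alpha> ^ l / \<alpha> ^ (n * card T)"
      using T(3) a0 a1 by (intro divide_left_mono power_decreasing) auto
    also have "\<dots> = \<alpha> ^ l * \<beta> ^ card T" by (simp add: \<beta>_def power_mult power_one_over)
    also have "\<beta> ^ card T = h T u" using T by (simp add: h_def)
    also have "h T u \<le> (\<Sum>T\<in>Pow Pos. h T u)"
      using T(1) repPos finPos b0 by (intro member_le_sum) (auto simp: h_def)
    finally show ?thesis using a0 by (simp add: mult_left_mono)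
  qed
  have "(\<Sum>u\<in>Bn X L. \<mu> u * \<alpha> ^ card (subwords n u)) \<le> (\<Sum>u\<in>Bn X L. \<mu> u * (\<alpha> ^ l * (\<Sum>T\<in>Pow Pos. h T u)))"
    using pt by (intro sum_mono mult_left_mono) (auto simp: mu_nonneg)
  also have "\<dots> = \<alpha> ^ l * (\<Sum>T\<in>Pow Pos. \<Sum>u\<in>Bn X L. \<mu> u * h T u)"
    by (simp add: sum_distrib_left sum.swap[of _ "Pow Pos"] mult_ac)
  also have "\<dots> \<le> \<alpha> ^ l * (\<Sum>T\<in>Pow Pos. (real L * K^2 * \<gamma>^n * \<beta>) ^ card T)"
  proof (intro mult_left_mono sum_mono)
    fix T assume TP: "T \<in> Pow Pos"
    show "(\<Sum>u\<in>Bn X L. \<mu> u * h T u) \<le> (real L * K^2 * \<gamma>^n * \<beta>) ^ card T"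
    proof (cases "sep n T")
      case True
      have finT: "finite T" using TP finPos finite_subset by blast
      have TL: "\<forall>p\<in>T. p + n \<le> L" using TP nL by (auto simp: Pos_def)
      have "(\<Sum>u\<in>Bn X L. \<mu> u * h T u) = \<beta> ^ card T * (\<Sum>u\<in>Bn X L. if T \<subseteq> rep n u then \<mu> u else 0)"
        using True by (simp add: h_def sum_distrib_left if_distrib mult_ac cong: if_cong)
      also have "\<dots> \<le> \<beta> ^ card T * (real L * (K^2 * \<gamma>^n))^card T"
        using rep_bound[OF gam g0 finT True TL] b0 by (intro mult_left_mono) auto
      also have "\<dots> = (real L * K^2 * \<gamma>^n * \<beta>) ^ card T" by (simp add: power_mult_distrib mult_ac)
      finally show ?thesis .
    next
      case False
      have "(\<Sum>u\<in>Bn X L. \<mu> u * h T u) = 0" using False by (simp add: h_def)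
      then show ?thesis using b0 g0 by simp
    qed
  qed (use a0 in simp)
  also have "(\<Sum>T\<in>Pow Pos. (real L * K^2 * \<gamma>^n * \<beta>) ^ card T) = (1 + real L * K^2 * \<gamma>^n * \<beta>) ^ l"
    using sum_pow_card[OF finPos] cPos by simp
  also have "real L * K^2 * \<gamma>^n * \<beta> = real L * K^2 * (\<gamma> / \<alpha>)^n"
    by (simp add: \<beta>_def power_divide)
  finally show ?thesis by (simp add: l_def)
qed

end

lemma approx_add_conv:
  fixes c :: "nat \<Rightarrow> real"
  assumes A: "\<And>m n. 1 \<le> m \<Longrightarrow> 1 \<le> n \<Longrightarrow> \<bar>c (m + n) - c m - c n\<bar> \<le> C"
  shows "convergent (\<lambda>n. c n / real n)"
proof -
  have C0: "0 \<le> C" using A[of 1 1] by simp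
  have claim: "\<bar>c (Suc q * n) - real (Suc q) * c n\<bar> \<le> real q * C" if n1: "1 \<le> n" for q n
  proof (induction q)
    case 0 then show ?case by simp
  next
    case (Suc q)
    have "Suc (Suc q) * n = Suc q * n + n" by simp
    moreover have "\<bar>c (Suc q * n + n) - c (Suc q * n) - c n\<bar> \<le> C" using A n1 by simp
    ultimately show ?case using Suc by (simp add: algebra_simps)
  qed
  have key: "\<bar>c (m * n) / real (m * n) - c n / real n\<bar> \<le> C / real n" if m1: "1 \<le> m" and n1: "1 \<le> n" for m n
  proof -
    obtain q where q: "m = Suc q" using m1 Suc_le_D[of 0 m] by auto
    have "\<bar>c (m * n) - real m * c n\<bar> \<le> real m * C" using claim[OF n1, of q] q C0 by (simp add: algebra_simps)
    moreover have "c (m * n) / real (m * n) - c n / real n = (c (m * n) - real m * c n) / real (m * n)"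
      using that by (simp add: field_simps)
    moreover have "real m * C / real (m * n) = C / real n" using that by simp
    ultimately show ?thesis using that
      by (metis abs_divide abs_of_nat divide_right_mono of_nat_0_le_iff)
  qed
  have bnd: "\<bar>c n / real n - c m / real m\<bar> \<le> C / real n + C / real m" if "1 \<le> m" "1 \<le> n" for m n
    using key[OF that] key[OF that(2,1)] by (simp add: mult.commute)
  have "Cauchy (\<lambda>n. c n / real n)"
  proof (rule CauchyI)
    fix e :: real assume e: "0 < e"
    obtain N :: nat where N: "2 * C / e \<le> real N" using real_arch_simple by blast
    show "\<exists>M. \<forall>m\<ge>M. \<forall>n\<ge>M. norm (c m / real m - c n / real n) < e"
    proof (intro exI[of _ "N + 1"] allI impI)
      fix m n :: nat assume mn: "N + 1 \<le> m" "N + 1 \<le> n"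
      have "C / real m \<le> C / real (N + 1)" "C / real n \<le> C / real (N + 1)"
        using mn C0 by (intro divide_left_mono; simp)+
      moreover have "2 * C / real (N + 1) < e"
      proof -
        have "2 * C \<le> e * real N" using N e by (simp add: field_simps)
        also have "\<dots> < e * real (N + 1)" using e by simp
        finally show ?thesis by (simp add: field_simps)
      qed
      ultimately show "norm (c m / real m - c n / real n) < e"
        using bnd[of n m] mn by simp
    qed
  qed
  then show ?thesis by (rule Cauchy_convergent)
qed

lemma birkhoff_add: "birkhoff f (m + n) x = birkhoff f m x + birkhoff f n ((shift ^^ m) x)"
proof (induction n)
  case 0 then show ?case by (simp add: birkhoff_def)
next
  case (Suc n)
  have "birkhoff f (m + Suc n) x = birkhoff f (m + n) x + f ((shift ^^ (m + n)) x)"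
    by (simp add: birkhoff_def)
  also have "(shift ^^ (m + n)) x = (shift ^^ n) ((shift ^^ m) x)"
    by (simp add: funpow_add funpow_swap1[symmetric] comp_def add.commute[of m n])
  finally show ?case using Suc by (simp add: birkhoff_def)
qed

context rs begin

lemma mu_take_drop: assumes "w \<in> Bn X (m + n)" "m \<ge> 1" "n \<ge> 1"
  shows "\<bar>ln (\<mu> w) - ln (\<mu> (take m w)) - ln (\<mu> (drop m w))\<bar> \<le> 3 * ln K"
proof -
  obtain x where x: "x \<in> X" "w = word_at x 0 (m + n)" using assms(1) by (auto simp: Bn_def)
  have tw: "take m w = word_at x 0 m" using x(2) by (simp add: word_at_add)
  have dw: "drop m w = word_at ((shift ^^ m) x) 0 n" using x(2) by (simp add: word_at_add word_at_shift)
  have xm: "(shift ^^ m) x \<in> X" using funpow_shift_in_X[OF SFT x(1)] .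
  have tB: "take m w \<in> Bn X m" using x tw by (auto simp: Bn_def)
  have dB: "drop m w \<in> Bn X n" using xm dw by (auto simp: Bn_def)
  have p1: "\<mu> (take m w) > 0" "\<mu> (drop m w) > 0" "\<mu> w > 0"
    using mu_pos[OF tB] mu_pos[OF dB] mu_pos[OF assms(1)] by auto
  have "w \<in> lang X" using assms(1) by (auto simp: lang_def)
  then have up: "\<mu> w \<le> K * \<mu> (take m w) * \<mu> (drop m w)"
    using quasi_mult[rule_format, of "take m w" "drop m w"] by simp
  have a: "\<mu> (take m w) \<le> K * exp (- P * real m + birkhoff f m x)"
    using gibbs_le(1)[OF assms(2) x(1)] tw by simp
  have b: "\<mu> (drop m w) \<le> K * exp (- P * real n + birkhoff f n ((shift ^^ m) x))"
    using gibbs_le(1)[OF assms(3) xm] dw by simp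
  have c: "exp (- P * real (m + n) + birkhoff f (m + n) x) \<le> K * \<mu> w"
    using gibbs_le(2)[of "m + n" x] assms x by simp
  have "\<mu> (take m w) * \<mu> (drop m w) \<le> (K * exp (- P * real m + birkhoff f m x)) * (K * exp (- P * real n + birkhoff f n ((shift ^^ m) x)))"
    using a b p1 by (intro mult_mono) auto
  also have "\<dots> = K^2 * exp (- P * real (m + n) + birkhoff f (m + n) x)"
    by (simp add: birkhoff_add power2_eq_square exp_add[symmetric] algebra_simps)
  also have "\<dots> \<le> K^2 * (K * \<mu> w)" using c K1 by (intro mult_left_mono) auto
  finally have low: "\<mu> (take m w) * \<mu> (drop m w) \<le> K^3 * \<mu> w" by (simp add: power3_eq_cube power2_eq_square mult_ac)
  have K0: "K > 0" using K1 by simp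
  have "ln (\<mu> w) \<le> ln (K * \<mu> (take m w) * \<mu> (drop m w))" using up p1 by simp
  also have "\<dots> = ln K + ln (\<mu> (take m w)) + ln (\<mu> (drop m w))" using K0 p1 by (simp add: ln_mult)
  finally have l1: "ln (\<mu> w) \<le> ln K + ln (\<mu> (take m w)) + ln (\<mu> (drop m w))" .
  have "ln (\<mu> (take m w)) + ln (\<mu> (drop m w)) = ln (\<mu> (take m w) * \<mu> (drop m w))" using p1 by (simp add: ln_mult)
  also have "\<dots> \<le> ln (K^3 * \<mu> w)" using low p1 by (intro ln_mono) auto
  also have "\<dots> = 3 * ln K + ln (\<mu> w)" using K0 p1 by (simp add: ln_mult ln_realpow)
  finally have l2: "ln (\<mu> (take m w)) + ln (\<mu> (drop m w)) \<le> 3 * ln K + ln (\<mu> w)" .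
  have "ln K \<ge> 0" using K1 by simp
  then show ?thesis using l1 l2 by linarith
qed


lemma preimage_shift: assumes "A \<in> sets M"
  shows "(shift ^^ m) -` A \<in> sets M \<and> measure M ((shift ^^ m) -` A) = measure M A"
proof (induction m)
  case 0 then show ?case using assms by simp
next
  case (Suc m)
  have inv': "\<forall>A\<in>sets M. shift -` A \<in> sets M \<and> measure M (shift -` A) = measure M A"
    using inv unfolding inv_prob_on_def by blast
  have e: "(shift ^^ Suc m) -` A = shift -` ((shift ^^ m) -` A)"
    by (simp only: funpow_Suc_right vimage_comp)
  show ?case unfolding e using inv' Suc by auto
qed

lemma measure_inter_X: assumes "A \<in> sets M" shows "measure M (X \<inter> A) = measure M A"
proof -
  have ps: "prob_space M" by (rule prob)
  have "measure M (A - (A \<inter> X)) = measure M A - measure M (A \<inter> X)"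
    using assms X_sets finite_measure.emeasure_finite[OF prob_space.finite_measure[OF ps]]
    by (intro measure_Diff) auto
  moreover have "measure M (A - X) \<le> measure M (space M - X)"
    using assms X_sets ps sets.sets_into_space[OF assms]
    by (intro finite_measure.finite_measure_mono prob_space.finite_measure) auto
  moreover have "measure M (space M - X) = 0"
    using prob_space.prob_compl[OF ps X_sets] X_meas by simp
  moreover have "A - (A \<inter> X) = A - X" by blast
  ultimately have "measure M A - measure M (A \<inter> X) \<le> 0" by simp
  moreover have "measure M (A \<inter> X) \<le> measure M A"
    using assms X_sets ps by (intro finite_measure.finite_measure_mono prob_space.finite_measure) auto
  ultimately show ?thesis by (simp add: Int_commute)
qed

lemma marg_take: assumes "u \<in> Bn X m"
  shows "(\<Sum>w\<in>{w\<in>Bn X (m + n). take m w = u}. \<mu> w) = \<mu> u"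
proof -
  have lu: "length u = m" using Bn_length[OF assms] .
  have "(\<Union>w\<in>{w\<in>Bn X (m + n). take m w = u}. cyl X w) = cyl X u"
  proof
    show "(\<Union>w\<in>{w\<in>Bn X (m + n). take m w = u}. cyl X w) \<subseteq> cyl X u"
    proof
      fix x assume "x \<in> (\<Union>w\<in>{w\<in>Bn X (m + n). take m w = u}. cyl X w)"
      then obtain w where w: "w \<in> Bn X (m + n)" "take m w = u" "x \<in> cyl X w" by blast
      then have "x \<in> X" "word_at x 0 (m + n) = w" using Bn_length[OF w(1)] by (auto simp: cyl_def)
      moreover have "take m (word_at x 0 (m + n)) = word_at x 0 m" by (simp add: word_at_add)
      ultimately show "x \<in> cyl X u" using w(2) lu by (auto simp: cyl_def)
    qed
  next
    show "cyl X u \<subseteq> (\<Union>w\<in>{w\<in>Bn X (m + n). take m w = u}. cyl X w)"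
    proof
      fix x assume x: "x \<in> cyl X u"
      then have xX: "x \<in> X" "word_at x 0 m = u" using lu by (auto simp: cyl_def)
      define w where "w = word_at x 0 (m + n)"
      have "w \<in> Bn X (m + n)" using xX by (auto simp: Bn_def w_def)
      moreover have "take m w = u" using xX(2) unfolding w_def by (simp add: word_at_add lu[symmetric])
      moreover have "x \<in> cyl X w" using xX by (simp add: cyl_def w_def)
      ultimately show "x \<in> (\<Union>w\<in>{w\<in>Bn X (m + n). take m w = u}. cyl X w)" by blast
    qed
  qed
  then show ?thesis using sum_mu_eq_measure[of "{w\<in>Bn X (m + n). take m w = u}" "m + n"]
    by (simp add: mu_def)
qed

lemma marg_drop: assumes "v \<in> Bn X n"
  shows "(\<Sum>w\<in>{w\<in>Bn X (m + n). drop m w = v}. \<mu> w) = \<mu> v"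
proof -
  have lv: "length v = n" using Bn_length[OF assms] .
  have "(\<Union>w\<in>{w\<in>Bn X (m + n). drop m w = v}. cyl X w) = X \<inter> (shift ^^ m) -` cyl X v"
  proof
    show "(\<Union>w\<in>{w\<in>Bn X (m + n). drop m w = v}. cyl X w) \<subseteq> X \<inter> (shift ^^ m) -` cyl X v"
    proof
      fix x assume "x \<in> (\<Union>w\<in>{w\<in>Bn X (m + n). drop m w = v}. cyl X w)"
      then obtain w where w: "w \<in> Bn X (m + n)" "drop m w = v" "x \<in> cyl X w" by blast
      then have xX: "x \<in> X" "word_at x 0 (m + n) = w" using Bn_length[OF w(1)] by (auto simp: cyl_def)
      have "drop m (word_at x 0 (m + n)) = word_at ((shift ^^ m) x) 0 n" by (simp add: word_at_add word_at_shift)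
      then have "word_at ((shift ^^ m) x) 0 n = v" using w(2) xX(2) by simp
      then show "x \<in> X \<inter> (shift ^^ m) -` cyl X v"
        using xX funpow_shift_in_X[OF SFT xX(1)] lv by (auto simp: cyl_def)
    qed
  next
    show "X \<inter> (shift ^^ m) -` cyl X v \<subseteq> (\<Union>w\<in>{w\<in>Bn X (m + n). drop m w = v}. cyl X w)"
    proof
      fix x assume x: "x \<in> X \<inter> (shift ^^ m) -` cyl X v"
      then have xX: "x \<in> X" "word_at ((shift ^^ m) x) 0 n = v" using lv by (auto simp: cyl_def)
      define w where "w = word_at x 0 (m + n)"
      have "w \<in> Bn X (m + n)" using xX by (auto simp: Bn_def w_def)
      moreover have "drop m w = v" using xX(2) unfolding w_def by (simp add: word_at_add word_at_shift)
      moreover have "x \<in> cyl X w" using xX by (simp add: cyl_def w_def)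
      ultimately show "x \<in> (\<Union>w\<in>{w\<in>Bn X (m + n). drop m w = v}. cyl X w)" by blast
    qed
  qed
  then have "(\<Sum>w\<in>{w\<in>Bn X (m + n). drop m w = v}. \<mu> w) = measure M (X \<inter> (shift ^^ m) -` cyl X v)"
    using sum_mu_eq_measure[of "{w\<in>Bn X (m + n). drop m w = v}" "m + n"] by simp
  also have "\<dots> = measure M ((shift ^^ m) -` cyl X v)"
    using measure_inter_X preimage_shift[OF cyl_sets] by blast
  also have "\<dots> = \<mu> v" using preimage_shift[OF cyl_sets] by (simp add: mu_def)
  finally show ?thesis .
qed

definition Hn :: "nat \<Rightarrow> real" where "Hn n = (\<Sum>w\<in>Bn X n. - \<mu> w * ln (\<mu> w))"

lemma Hn_take: "(\<Sum>w\<in>Bn X (m + n). \<mu> w * (- ln (\<mu> (take m w)))) = Hn m"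
proof -
  have "(\<Sum>w\<in>Bn X (m + n). \<mu> w * (- ln (\<mu> (take m w))))
      = (\<Sum>u\<in>Bn X m. \<Sum>w\<in>{w\<in>Bn X (m + n). take m w = u}. \<mu> w * (- ln (\<mu> (take m w))))"
    using Bn_sub[OF SFT, of _ "m + n" 0 m] by (intro sum.group[symmetric] Bn_finite) auto
  also have "\<dots> = (\<Sum>u\<in>Bn X m. (\<Sum>w\<in>{w\<in>Bn X (m + n). take m w = u}. \<mu> w) * (- ln (\<mu> u)))"
    by (intro sum.cong refl) (auto simp: sum_distrib_right sum_negf)
  also have "\<dots> = Hn m" unfolding Hn_def using marg_take by (intro sum.cong refl) auto
  finally show ?thesis .
qed

lemma Hn_drop: "(\<Sum>w\<in>Bn X (m + n). \<mu> w * (- ln (\<mu> (drop m w)))) = Hn n"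
proof -
  have "(\<Sum>w\<in>Bn X (m + n). \<mu> w * (- ln (\<mu> (drop m w))))
      = (\<Sum>v\<in>Bn X n. \<Sum>w\<in>{w\<in>Bn X (m + n). drop m w = v}. \<mu> w * (- ln (\<mu> (drop m w))))"
  proof (intro sum.group[symmetric] Bn_finite)
    show "drop m ` Bn X (m + n) \<subseteq> Bn X n"
    proof
      fix v assume "v \<in> drop m ` Bn X (m + n)"
      then obtain w where w: "w \<in> Bn X (m + n)" "v = drop m w" by blast
      have "take n (drop m w) \<in> Bn X n" using Bn_sub[OF SFT w(1), of m n] by simp
      moreover have "take n (drop m w) = drop m w" using Bn_length[OF w(1)] by simp
      ultimately show "v \<in> Bn X n" using w(2) by simp
    qed
  qed
  also have "\<dots> = (\<Sum>v\<in>Bn X n. (\<Sum>w\<in>{w\<in>Bn X (m + n). drop m w = v}. \<mu> w) * (- ln (\<mu> v)))"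
    by (intro sum.cong refl) (auto simp: sum_distrib_right sum_negf)
  also have "\<dots> = Hn n" unfolding Hn_def using marg_drop by (intro sum.cong refl) auto
  finally show ?thesis .
qed

lemma Hn_add: assumes "m \<ge> 1" "n \<ge> 1" shows "\<bar>Hn (m + n) - Hn m - Hn n\<bar> \<le> 3 * ln K"
proof -
  have "Hn (m + n) - Hn m - Hn n = (\<Sum>w\<in>Bn X (m + n). \<mu> w * (- (ln (\<mu> w) - ln (\<mu> (take m w)) - ln (\<mu> (drop m w)))))"
    unfolding Hn_take[symmetric, of m n] Hn_drop[symmetric, of n m]
    by (simp add: Hn_def sum_subtractf[symmetric] algebra_simps)
  also have "\<bar>\<dots>\<bar> \<le> (\<Sum>w\<in>Bn X (m + n). \<bar>\<mu> w * (- (ln (\<mu> w) - ln (\<mu> (take m w)) - ln (\<mu> (drop m w))))\<bar>)"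
    by (rule sum_abs)
  also have "\<dots> \<le> (\<Sum>w\<in>Bn X (m + n). \<mu> w * (3 * ln K))"
  proof (intro sum_mono)
    fix w assume w: "w \<in> Bn X (m + n)"
    show "\<bar>\<mu> w * (- (ln (\<mu> w) - ln (\<mu> (take m w)) - ln (\<mu> (drop m w))))\<bar> \<le> \<mu> w * (3 * ln K)"
      using mu_take_drop[OF w assms] mu_nonneg[of w] by (simp add: abs_mult mult_left_mono)
  qed
  also have "\<dots> = 3 * ln K" using sum_mu_Bn by (simp add: sum_distrib_right[symmetric])
  finally show ?thesis .
qed

end

lemma discrete_ivt:
  fixes V :: "nat \<Rightarrow> real"
  assumes "b \<le> V 0" "V N \<le> a" "\<forall>j<N. \<bar>V (Suc j) - V j\<bar> \<le> D" "D < b - a" "0 \<le> D"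
  shows "\<exists>j\<le>N. a < V j \<and> V j < b"
  using assms
proof (induction N arbitrary: V)
  case 0 then show ?case by simp
next
  case (Suc N)
  show ?case
  proof (cases "V 1 < b")
    case True
    have "\<bar>V 1 - V 0\<bar> \<le> D" using Suc.prems(3) by auto
    then have "a < V 1" using Suc.prems(1,4) by linarith
    then show ?thesis using True by (intro exI[of _ 1]) auto
  next
    case False
    have "\<exists>j\<le>N. a < (V \<circ> Suc) j \<and> (V \<circ> Suc) j < b"
      using Suc.prems False by (intro Suc.IH) auto
    then obtain j where "j \<le> N" "a < V (Suc j)" "V (Suc j) < b" by auto
    then show ?thesis by (intro exI[of _ "Suc j"]) auto
  qed
qed

lemma weighted_avg:
  fixes p v :: "'b \<Rightarrow> real"
  assumes fin: "finite S" and ne: "S \<noteq> {}" and pos: "\<forall>s\<in>S. p s > 0" and sum1: "(\<Sum>s\<in>S. p s) = 1"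
  shows "\<exists>s\<in>S. v s \<ge> (\<Sum>s\<in>S. p s * v s)" and "\<exists>s\<in>S. v s \<le> (\<Sum>s\<in>S. p s * v s)"
proof -
  let ?A = "\<Sum>s\<in>S. p s * v s"
  show "\<exists>s\<in>S. v s \<ge> ?A"
  proof (rule ccontr)
    assume "\<not> ?thesis"
    then have "\<forall>s\<in>S. p s * v s < p s * ?A" using pos by auto
    then have "?A < (\<Sum>s\<in>S. p s * ?A)" using fin ne by (intro sum_strict_mono) auto
    also have "\<dots> = ?A" using sum1 by (simp add: sum_distrib_right[symmetric])
    finally show False by simp
  qed
  show "\<exists>s\<in>S. v s \<le> ?A"
  proof (rule ccontr)
    assume "\<not> ?thesis"
    then have "\<forall>s\<in>S. p s * ?A < p s * v s" using pos by auto
    then have "(\<Sum>s\<in>S. p s * ?A) < ?A" using fin ne by (intro sum_strict_mono) auto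
    also have "(\<Sum>s\<in>S. p s * ?A) = ?A" using sum1 by (simp add: sum_distrib_right[symmetric])
    finally show False by simp
  qed
qed

context rs begin

lemma entropy_lim: "(\<lambda>n. Hn n / real n) \<longlonglongrightarrow> entropy X M"
proof -
  have "convergent (\<lambda>n. Hn n / real n)"
    by (rule approx_add_conv[of Hn "3 * ln K"]) (rule Hn_add)
  moreover have "entropy X M = lim (\<lambda>n. Hn n / real n)" by (simp add: entropy_def Hn_def)
  ultimately show ?thesis by (simp add: convergent_LIMSEQ_iff)
qed

lemma X_ne: "X \<noteq> {}" using X_meas by auto

lemma Bn_ne: "Bn X m \<noteq> {}" using X_ne by (simp add: Bn_def)

definition mmin where "mmin = Min (\<mu> ` Bn X 1)"

lemma mmin: "mmin > 0" "\<And>a. a \<in> Bn X 1 \<Longrightarrow> mmin \<le> \<mu> a"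
proof -
  show "mmin > 0" unfolding mmin_def using Bn_finite Bn_ne mu_pos by (subst Min_gr_iff) auto
  show "\<And>a. a \<in> Bn X 1 \<Longrightarrow> mmin \<le> \<mu> a" unfolding mmin_def using Bn_finite[of X 1] by (intro Min_le) auto
qed

lemma letter_ln: assumes "a \<in> Bn X 1" shows "\<bar>ln (\<mu> a)\<bar> \<le> - ln mmin"
proof -
  have "mmin \<le> \<mu> a" by (rule mmin(2)[OF assms])
  then have "ln mmin \<le> ln (\<mu> a)" using mmin(1) by simp
  moreover have "ln (\<mu> a) \<le> 0" using mu_le1 mu_pos[OF assms] by simp
  ultimately show ?thesis by linarith
qed

lemma slide_step: assumes x: "x \<in> X" and n1: "n \<ge> 1"
  shows "\<bar>ln (\<mu> (word_at x (int (Suc j)) n)) - ln (\<mu> (word_at x (int j) n))\<bar> \<le> 6 * ln K - 2 * ln mmin"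
proof -
  define y where "y = (shift ^^ j) x"
  have yX: "y \<in> X" using funpow_shift_in_X[OF SFT x] by (simp add: y_def)
  define z where "z = word_at y 0 (n + 1)"
  have zB: "z \<in> Bn X (n + 1)" using yX by (auto simp: Bn_def z_def)
  have zB': "z \<in> Bn X (1 + n)" using zB by simp
  have t1: "take n z = word_at x (int j) n"
    by (simp only: z_def word_at_add) (simp add: y_def word_at_shift)
  have d1: "drop n z = word_at y (int n) 1" by (simp only: z_def word_at_add) simp
  have t2: "take 1 z = word_at y 0 1" by (simp add: z_def word_at_add[of y 0 1 n, simplified])
  have d2: "drop 1 z = word_at x (int (Suc j)) n"
  proof -
    have "z = word_at y 0 (1 + n)" by (simp add: z_def)
    moreover have "drop 1 (word_at y 0 (1 + n)) = word_at y 1 n" by (simp only: word_at_add) simp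
    ultimately have "drop 1 z = word_at y 1 n" by simp
    also have "\<dots> = word_at x (int (Suc j)) n" by (simp add: y_def word_at_shift algebra_simps)
    finally show ?thesis .
  qed
  have ld: "drop n z \<in> Bn X 1"
    using Bn_sub[OF SFT zB, of n 1] zB Bn_length[OF zB] by (simp add: take_all)
  have lt: "take 1 z \<in> Bn X 1" using Bn_sub[OF SFT zB, of 0 1] by simp
  have A: "\<bar>ln (\<mu> z) - ln (\<mu> (take n z)) - ln (\<mu> (drop n z))\<bar> \<le> 3 * ln K"
    using mu_take_drop[OF zB n1] by simp
  have B: "\<bar>ln (\<mu> z) - ln (\<mu> (take 1 z)) - ln (\<mu> (drop 1 z))\<bar> \<le> 3 * ln K"
    using mu_take_drop[OF zB' _ n1] by simp
  show ?thesis unfolding t1[symmetric] d2[symmetric] using A B letter_ln[OF ld] letter_ln[OF lt] by linarith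
qed

lemma E_nonempty:
  assumes mixl: "\<forall>m. \<forall>u\<in>Bn X m. \<forall>v. measure M (cyl X u \<inter> (shift ^^ (m + g)) -` cyl X v) \<ge> (1 / K) * \<mu> u * \<mu> v"
    and d0: "0 < \<delta>"
  shows "\<exists>N. \<forall>n\<ge>N. E_set M X \<delta> n \<noteq> {}"
proof -
  define h where "h = entropy X M"
  define D where "D = 6 * ln K - 2 * ln mmin"
  obtain N1 where N1: "\<forall>n\<ge>N1. \<bar>Hn n / real n - h\<bar> < \<delta>"
    using entropy_lim d0 unfolding h_def LIMSEQ_def dist_real_def by blast
  obtain N2 :: nat where N2: "D / (2 * \<delta>) < real N2" using reals_Archimedean2 by blast
  show ?thesis
  proof (intro exI[of _ "N1 + N2 + 1"] allI impI)
    fix n assume nN: "N1 + N2 + 1 \<le> n"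
    have n1: "n \<ge> 1" using nN by simp
    have Hh: "\<bar>Hn n / real n - h\<bar> < \<delta>" using N1 nN by simp
    have Dn: "D < 2 * \<delta> * real n"
    proof -
      have "D / (2 * \<delta>) < real n" using N2 nN by linarith
      then show ?thesis using d0 by (simp add: field_simps)
    qed
    show "E_set M X \<delta> n \<noteq> {}"
    proof
      assume Eempty: "E_set M X \<delta> n = {}"
      have notE: "\<bar>- (1 / real n) * ln (\<mu> w) - h\<bar> \<ge> \<delta>" if "w \<in> Bn X n" for w
        using Eempty that by (auto simp: E_set_def h_def)
      have HnE: "Hn n = (\<Sum>w\<in>Bn X n. \<mu> w * (- ln (\<mu> w)))" by (simp add: Hn_def)
      have pos': "\<forall>s\<in>Bn X n. \<mu> s > 0" using mu_pos by blast
      obtain whi where whi0: "whi \<in> Bn X n" "(\<Sum>s\<in>Bn X n. \<mu> s * - ln (\<mu> s)) \<le> - ln (\<mu> whi)"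
        using weighted_avg(1)[OF Bn_finite[of X n] Bn_ne[of n] pos' sum_mu_Bn[of n], where v = "\<lambda>w. - ln (\<mu> w)"] by blast
      then have whi: "whi \<in> Bn X n" "- ln (\<mu> whi) \<ge> Hn n" using HnE by simp_all
      obtain wlo where wlo0: "wlo \<in> Bn X n" "- ln (\<mu> wlo) \<le> (\<Sum>s\<in>Bn X n. \<mu> s * - ln (\<mu> s))"
        using weighted_avg(2)[OF Bn_finite[of X n] Bn_ne[of n] pos' sum_mu_Bn[of n], where v = "\<lambda>w. - ln (\<mu> w)"] by blast
      then have wlo: "wlo \<in> Bn X n" "- ln (\<mu> wlo) \<le> Hn n" using HnE by simp_all
      have nr: "real n > 0" using n1 by simp
      have hi: "- ln (\<mu> whi) \<ge> real n * (h + \<delta>)"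
      proof -
        have "Hn n / real n \<le> (- ln (\<mu> whi)) / real n" using whi(2) nr by (intro divide_right_mono) auto
        then have "- (1 / real n) * ln (\<mu> whi) \<ge> Hn n / real n" by simp
        then have "- (1 / real n) * ln (\<mu> whi) > h - \<delta>" using Hh by linarith
        then have "- (1 / real n) * ln (\<mu> whi) \<ge> h + \<delta>" using notE[OF whi(1)] by linarith
        then show ?thesis using nr by (simp add: field_simps)
      qed
      have lo: "- ln (\<mu> wlo) \<le> real n * (h - \<delta>)"
      proof -
        have "(- ln (\<mu> wlo)) / real n \<le> Hn n / real n" using wlo(2) nr by (intro divide_right_mono) auto
        then have "- (1 / real n) * ln (\<mu> wlo) \<le> Hn n / real n" by simp
        then have "- (1 / real n) * ln (\<mu> wlo) < h + \<delta>" using Hh by linarith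
        then have "- (1 / real n) * ln (\<mu> wlo) \<le> h - \<delta>" using notE[OF wlo(1)] by linarith
        then show ?thesis using nr by (simp add: field_simps)
      qed
      have "measure M (cyl X whi \<inter> (shift ^^ (n + g)) -` cyl X wlo) \<ge> (1 / K) * \<mu> whi * \<mu> wlo"
        using mixl whi(1) by blast
      moreover have "(1 / K) * \<mu> whi * \<mu> wlo > 0" using K1 mu_pos whi(1) wlo(1) by simp
      ultimately have "cyl X whi \<inter> (shift ^^ (n + g)) -` cyl X wlo \<noteq> {}" by auto
      then obtain x where x: "x \<in> cyl X whi" "(shift ^^ (n + g)) x \<in> cyl X wlo" by blast
      have xX: "x \<in> X" and x0: "word_at x 0 n = whi" using x(1) Bn_length[OF whi(1)] by (auto simp: cyl_def)
      have x1: "word_at x (int (n + g)) n = wlo"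
        using x(2) Bn_length[OF wlo(1)] by (auto simp: cyl_def word_at_shift)
      define V where "V = (\<lambda>j. - ln (\<mu> (word_at x (int j) n)))"
      have "\<exists>j\<le>n + g. real n * (h - \<delta>) < V j \<and> V j < real n * (h + \<delta>)"
      proof (rule discrete_ivt[where D = D])
        show "real n * (h + \<delta>) \<le> V 0" using hi x0 by (simp add: V_def)
        show "V (n + g) \<le> real n * (h - \<delta>)" using lo x1 by (simp add: V_def)
        show "\<forall>j<n + g. \<bar>V (Suc j) - V j\<bar> \<le> D"
          using slide_step[OF xX n1] by (simp add: V_def D_def abs_minus_commute)
        show "D < real n * (h + \<delta>) - real n * (h - \<delta>)" using Dn by (simp add: algebra_simps)
        show "0 \<le> D"
        proof -
          obtain a where a: "a \<in> Bn X 1" using Bn_ne by blast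
          then have "mmin \<le> 1" using mmin(2)[OF a] mu_le1[of a] by linarith
          then have "ln mmin \<le> 0" using mmin(1) by simp
          moreover have "ln K \<ge> 0" using K1 by simp
          ultimately show ?thesis unfolding D_def by linarith
        qed
      qed
      then obtain j where j: "real n * (h - \<delta>) < V j" "V j < real n * (h + \<delta>)" by blast
      have wB: "word_at x (int j) n \<in> Bn X n"
      proof -
        have "word_at ((shift ^^ j) x) 0 n = word_at x (int j) n" by (simp add: word_at_shift)
        then show ?thesis using funpow_shift_in_X[OF SFT xX, of j] unfolding Bn_def by (metis image_eqI)
      qed
      have "\<bar>- (1 / real n) * ln (\<mu> (word_at x (int j) n)) - h\<bar> < \<delta>"
      proof -
        have "h - \<delta> < V j / real n" "V j / real n < h + \<delta>" using j nr by (simp_all add: field_simps)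
        moreover have "- (1 / real n) * ln (\<mu> (word_at x (int j) n)) = V j / real n" by (simp add: V_def)
        ultimately show ?thesis by linarith
      qed
      then show False using notE[OF wB] by linarith
    qed
  qed
qed

end

lemma ln7: fixes a b x d e f g :: real
  assumes "0<a" "0<b" "0<x" "0<d" "0<e" "0<f" "0<g"
  shows "ln (a*b*x*d*(e*f*g)) = ln a + ln b + ln x + ln d + (ln e + ln f + ln g)"
  using assms by (simp add: ln_mult)
lemma ln_low_eq: fixes c K \<alpha> P h \<delta> :: real and n k :: nat
  assumes c0: "0 < c" and K0: "0 < K" and a0: "0 < \<alpha>"
  shows "ln ((1 / c ^ n) * (1 / K) * \<alpha> ^ m * exp (P * real k) * ((1 / K) * exp (- real n * (h + \<delta>)) * exp (- real n * (h + \<delta>))))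
   = - real n * ln c - 2 * ln K + real m * ln \<alpha> + P * real k - 2 * real n * (h + \<delta>)"
proof -
  have "ln ((1 / c ^ n) * (1 / K) * \<alpha> ^ m * exp (P * real k) * ((1 / K) * exp (- real n * (h + \<delta>)) * exp (- real n * (h + \<delta>))))
    = ln (1 / c ^ n) + ln (1 / K) + ln (\<alpha> ^ m) + ln (exp (P * real k)) + (ln (1 / K) + ln (exp (- real n * (h + \<delta>))) + ln (exp (- real n * (h + \<delta>))))"
    using c0 K0 a0 by (intro ln7) auto
  also have "\<dots> = - real n * ln c - 2 * ln K + real m * ln \<alpha> + P * real k - 2 * real n * (h + \<delta>)"
    using c0 K0 a0 by (simp add: ln_div ln_realpow)
  finally show ?thesis .
qed
lemma ln_up_eq: fixes K \<alpha> P q :: real and l k m :: nat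
  assumes K0: "0 < K" and a0: "0 < \<alpha>" and q0: "0 < q"
  shows "ln (K * exp (P * real k) * (\<alpha> ^ m * q ^ m)) = ln K + P * real k + real m * ln \<alpha> + real m * ln q"
proof -
  have "ln (K * exp (P * real k) * (\<alpha> ^ m * q ^ m)) = ln K + ln (exp (P * real k)) + (ln (\<alpha> ^ m) + ln (q ^ m))"
    using K0 a0 q0 by (simp add: ln_mult)
  then show ?thesis using a0 q0 by (simp add: ln_realpow)
qed

lemma ksq_rho:
  fixes k :: "nat \<Rightarrow> nat"
  assumes ksq: "\<forall>\<^sub>F n in sequentially. real (k n) \<le> real n ^ 2" and r0: "0 < \<rho>" and r1: "\<rho> < 1"
  shows "(\<lambda>n. real (k n) * \<rho> ^ n) \<longlonglongrightarrow> 0"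
proof -
  define \<sigma> where "\<sigma> = sqrt \<rho>"
  have s0: "0 < \<sigma>" and s1: "\<sigma> < 1" using r0 r1 by (auto simp: \<sigma>_def)
  have rs: "\<rho> ^ n = (\<sigma> ^ n)^2" for n
  proof -
    have "(\<sigma> ^ n)^2 = (\<sigma>^2)^n" by (metis power_mult mult.commute)
    moreover have "\<sigma>^2 = \<rho>" using r0 by (simp add: \<sigma>_def)
    ultimately show ?thesis by simp
  qed
  have "(\<lambda>n. real n * \<sigma> ^ n) \<longlonglongrightarrow> 0" using powser_times_n_limit_0[of \<sigma>] s0 s1 by simp
  then have "(\<lambda>n. (real n * \<sigma> ^ n)^2) \<longlonglongrightarrow> 0" using tendsto_power[of _ 0 _ 2] by fastforce
  then have T: "(\<lambda>n. real n ^ 2 * \<rho> ^ n) \<longlonglongrightarrow> 0" by (simp add: rs power_mult_distrib)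
  show ?thesis
  proof (rule tendsto_sandwich[OF _ _ tendsto_const T])
    show "\<forall>\<^sub>F n in sequentially. 0 \<le> real (k n) * \<rho> ^ n" using r0 by simp
    show "\<forall>\<^sub>F n in sequentially. real (k n) * \<rho> ^ n \<le> real n ^ 2 * \<rho> ^ n"
      using ksq by eventually_elim (use r0 in \<open>auto intro: mult_right_mono\<close>)
  qed
qed

lemma asym:
  fixes k :: "nat \<Rightarrow> nat" and e :: "nat \<Rightarrow> real" and \<alpha> \<rho> K c P h \<delta> :: real
  assumes a0: "0 < \<alpha>" and a1: "\<alpha> \<le> 1" and r0: "0 < \<rho>" and r1: "\<rho> < 1" and K1: "1 < K" and c1: "1 \<le> c"
    and k_ge: "\<forall>n. n \<le> k n" and k_lim: "(\<lambda>n. real n / real (k n)) \<longlonglongrightarrow> 0"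
    and ksq: "\<forall>\<^sub>F n in sequentially. real (k n) \<le> real n ^ 2"
    and ev: "\<forall>\<^sub>F n in sequentially.
      (1 / c ^ n) * (1 / K) * \<alpha> ^ (k n - n + 1) * exp (P * real (k n)) * ((1 / K) * exp (- real n * (h + \<delta>)) * exp (- real n * (h + \<delta>))) \<le> e n
      \<and> e n \<le> K * exp (P * real (k n)) * (\<alpha> ^ (k n - n + 1) * (1 + real (k n) * K^2 * \<rho>^n) ^ (k n - n + 1))"
  shows "(\<lambda>n. ln (e n) / real (k n)) \<longlonglongrightarrow> P + ln \<alpha>"
proof -
  define r where "r = (\<lambda>n. real n / real (k n))"
  define s where "s = (\<lambda>n. 1 / real (k n))"
  define t where "t = (\<lambda>n. ln (1 + real (k n) * K^2 * \<rho>^n))"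
  have r: "r \<longlonglongrightarrow> 0" using k_lim by (simp add: r_def)
  have s: "s \<longlonglongrightarrow> 0"
  proof (rule tendsto_sandwich[OF _ _ tendsto_const lim_1_over_n])
    show "\<forall>\<^sub>F n in sequentially. 0 \<le> s n" by (simp add: s_def)
    show "\<forall>\<^sub>F n in sequentially. s n \<le> 1 / real n"
      using eventually_ge_at_top[of 1]
    proof eventually_elim
      case (elim n)
      then have "real n \<le> real (k n)" "0 < real n" using k_ge by auto
      then show ?case unfolding s_def by (intro divide_left_mono) auto
    qed
  qed
  have t: "t \<longlonglongrightarrow> 0"
  proof -
    have "(\<lambda>n. real (k n) * \<rho> ^ n * K^2) \<longlonglongrightarrow> 0"
      by (rule tendsto_mult_left_zero[OF ksq_rho[OF ksq r0 r1]])
    then have "(\<lambda>n. 1 + real (k n) * K^2 * \<rho>^n) \<longlonglongrightarrow> 1 + 0"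
      by (intro tendsto_add tendsto_const) (simp add: mult_ac)
    then have "(\<lambda>n. ln (1 + real (k n) * K^2 * \<rho>^n)) \<longlonglongrightarrow> ln (1 + 0)"
      by (intro tendsto_ln) auto
    then show ?thesis by (simp add: t_def)
  qed
  define lo where "lo = (\<lambda>n. - r n * ln c - 2 * ln K * s n + (1 - r n + s n) * ln \<alpha> + P - 2 * (h + \<delta>) * r n)"
  define up where "up = (\<lambda>n. ln K * s n + P + (1 - r n + s n) * ln \<alpha> + (1 - r n + s n) * t n)"
  have lo_lim: "lo \<longlonglongrightarrow> P + ln \<alpha>"
  proof -
    have "lo \<longlonglongrightarrow> - 0 * ln c - 2 * ln K * 0 + (1 - 0 + 0) * ln \<alpha> + P - 2 * (h + \<delta>) * 0"
      unfolding lo_def by (intro tendsto_intros r s)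
    then show ?thesis by (simp add: add.commute)
  qed
  have up_lim: "up \<longlonglongrightarrow> P + ln \<alpha>"
  proof -
    have "up \<longlonglongrightarrow> ln K * 0 + P + (1 - 0 + 0) * ln \<alpha> + (1 - 0 + 0) * 0"
      unfolding up_def by (intro tendsto_intros r s t)
    then show ?thesis by (simp add: add.commute)
  qed
  have bounds: "\<forall>\<^sub>F n in sequentially. lo n \<le> ln (e n) / real (k n) \<and> ln (e n) / real (k n) \<le> up n"
    using ev eventually_ge_at_top[of 1]
  proof eventually_elim
    case (elim n)
    have n1: "1 \<le> n" using elim by simp
    have kpos: "0 < real (k n)" using k_ge n1 by (metis of_nat_0_less_iff order_less_le_trans zero_less_one)
    define l where "l = real (k n) - real n + 1"
    have lreal: "real (k n - n + 1) = l" using k_ge by (simp add: l_def of_nat_diff)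
    define lowE where "lowE = (1 / c ^ n) * (1 / K) * \<alpha> ^ (k n - n + 1) * exp (P * real (k n)) * ((1 / K) * exp (- real n * (h + \<delta>)) * exp (- real n * (h + \<delta>)))"
    define upE where "upE = K * exp (P * real (k n)) * (\<alpha> ^ (k n - n + 1) * (1 + real (k n) * K^2 * \<rho>^n) ^ (k n - n + 1))"
    have c0: "0 < c" using c1 by simp
    have K0: "0 < K" using K1 by simp
    have q0: "0 < 1 + real (k n) * K^2 * \<rho>^n" using r0 by (simp add: add_pos_nonneg)
    have lowpos: "0 < lowE" unfolding lowE_def using c0 K0 a0 by simp
    have elo: "lowE \<le> e n" and eup: "e n \<le> upE" using elim by (simp_all add: lowE_def upE_def)
    have epos: "0 < e n" using lowpos elo by simp
    have ln_low: "ln lowE = - real n * ln c - 2 * ln K + l * ln \<alpha> + P * real (k n) - 2 * real n * (h + \<delta>)"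
      unfolding lowE_def using ln_low_eq[OF c0 K0 a0, of n "k n - n + 1" P "k n" h \<delta>] lreal by simp
    have ln_up: "ln upE = ln K + P * real (k n) + l * ln \<alpha> + l * ln (1 + real (k n) * K^2 * \<rho>^n)"
      unfolding upE_def using ln_up_eq[OF K0 a0 q0, of P "k n" "k n - n + 1"] lreal by simp
    have "ln lowE \<le> ln (e n)" using elo lowpos by simp
    then have L: "ln lowE / real (k n) \<le> ln (e n) / real (k n)" using kpos by (simp add: divide_right_mono)
    have "ln (e n) \<le> ln upE" using eup epos by simp
    then have U: "ln (e n) / real (k n) \<le> ln upE / real (k n)" using kpos by (simp add: divide_right_mono)
    have lo_eq: "lo n = ln lowE / real (k n)"
      unfolding ln_low lo_def r_def s_def l_def using kpos by (simp add: field_simps)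
    have up_eq: "up n = ln upE / real (k n)"
      unfolding ln_up up_def r_def s_def t_def l_def using kpos by (simp add: field_simps)
    show ?case using L U lo_eq up_eq by simp
  qed
  show ?thesis
    by (rule tendsto_sandwich[OF _ _ lo_lim up_lim]) (use bounds in \<open>auto elim: eventually_mono\<close>)
qed


context rs begin

lemma card_Bn_le: "card (Bn X n) \<le> CARD('a) ^ n"
proof -
  have "Bn X n \<subseteq> {w. set w \<subseteq> (UNIV::'a set) \<and> length w = n}" by (auto simp: Bn_def)
  moreover have fin: "finite {w. set w \<subseteq> (UNIV::'a set) \<and> length w = n}"
    by (rule finite_lists_length_eq) simp
  ultimately have "card (Bn X n) \<le> card {w. set w \<subseteq> (UNIV::'a set) \<and> length w = n}"
    by (intro card_mono)
  also have "\<dots> = CARD('a) ^ n" by (rule card_lists_length_eq) simp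
  finally show ?thesis .
qed

lemma E_sub: "E_set M X \<delta> n \<subseteq> Bn X n" by (auto simp: E_set_def)

lemma psi_upper:
  assumes gam: "\<forall>b\<in>Bn X n. \<mu> b \<le> \<gamma>^n" and g0: "0 \<le> \<gamma>"
    and a0: "0 < \<alpha>" and a1: "\<alpha> \<le> 1" and n1: "1 \<le> n" and nk: "n \<le> k"
    and Ene: "E_set M X \<delta> n \<noteq> {}"
  shows "expected_psi M X f \<delta> \<alpha> n k \<le> K * exp (P * real k) * (\<alpha> ^ (k - n + 1) * (1 + real k * K^2 * (\<gamma> / \<alpha>)^n) ^ (k - n + 1))"
proof -
  have finE: "finite (E_set M X \<delta> n)" using E_sub Bn_finite finite_subset by blast
  have cE: "1 \<le> card (E_set M X \<delta> n)" using finE Ene by (simp add: Suc_le_eq card_gt_0_iff)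
  have GB: "G_set M X \<delta> n k \<subseteq> Bn X k" by (auto simp: G_set_def)
  have k1: "1 \<le> k" using n1 nk by simp
  have S0: "0 \<le> (\<Sum>u\<in>G_set M X \<delta> n k. exp (Smf X f u) * \<alpha> ^ card (subwords n u))"
    using a0 by (intro sum_nonneg) auto
  have "(\<Sum>u\<in>G_set M X \<delta> n k. exp (Smf X f u) * \<alpha> ^ card (subwords n u))
      \<le> (\<Sum>u\<in>Bn X k. exp (Smf X f u) * \<alpha> ^ card (subwords n u))"
    using GB a0 by (intro sum_mono2 Bn_finite) auto
  also have "\<dots> \<le> (\<Sum>u\<in>Bn X k. K * exp (P * real k) * (\<mu> u * \<alpha> ^ card (subwords n u)))"
  proof (intro sum_mono)
    fix u assume u: "u \<in> Bn X k"
    have "exp (Smf X f u) * \<alpha> ^ card (subwords n u) \<le> (K * exp (P * real k) * \<mu> u) * \<alpha> ^ card (subwords n u)"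
      using Smf_bounds(1)[OF u k1] a0 by (intro mult_right_mono) auto
    then show "exp (Smf X f u) * \<alpha> ^ card (subwords n u) \<le> K * exp (P * real k) * (\<mu> u * \<alpha> ^ card (subwords n u))"
      by (simp add: mult_ac)
  qed
  also have "\<dots> = K * exp (P * real k) * (\<Sum>u\<in>Bn X k. \<mu> u * \<alpha> ^ card (subwords n u))"
    by (simp add: sum_distrib_left)
  also have "\<dots> \<le> K * exp (P * real k) * (\<alpha> ^ (k - n + 1) * (1 + real k * K^2 * (\<gamma> / \<alpha>)^n) ^ (k - n + 1))"
    using upper_sum[OF gam g0 a0 a1 n1 nk] K1 by (intro mult_left_mono) auto
  finally have B: "(\<Sum>u\<in>G_set M X \<delta> n k. exp (Smf X f u) * \<alpha> ^ card (subwords n u))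
      \<le> K * exp (P * real k) * (\<alpha> ^ (k - n + 1) * (1 + real k * K^2 * (\<gamma> / \<alpha>)^n) ^ (k - n + 1))" .
  have "expected_psi M X f \<delta> \<alpha> n k = (1 / real (card (E_set M X \<delta> n))) *
     (\<Sum>u\<in>G_set M X \<delta> n k. exp (Smf X f u) * \<alpha> ^ card (subwords n u))"
    using expected_psi_eq[of \<alpha> n k] a0 a1 nk by simp
  also have "\<dots> \<le> 1 * (\<Sum>u\<in>G_set M X \<delta> n k. exp (Smf X f u) * \<alpha> ^ card (subwords n u))"
    using cE S0 by (intro mult_right_mono) auto
  finally show ?thesis using B by simp
qed

lemma G_lower:
  assumes mixl: "\<forall>g\<ge>g0. \<forall>m. \<forall>u\<in>Bn X m. \<forall>v. measure M (cyl X u \<inter> (shift ^^ (m + g)) -` cyl X v) \<ge> (1 / K) * \<mu> u * \<mu> v"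
    and wE: "w \<in> E_set M X \<delta> n" and kn: "2 * n + g0 \<le> k"
  shows "(1 / K) * \<mu> w * \<mu> w \<le> measure M (\<Union>u\<in>G_set M X \<delta> n k. cyl X u)"
proof -
  have wB: "w \<in> Bn X n" using wE E_sub by blast
  have lw: "length w = n" using Bn_length[OF wB] .
  define g' where "g' = k - 2 * n"
  have gk: "n + g' = k - n" using kn by (simp add: g'_def)
  have sub: "cyl X w \<inter> (shift ^^ (k - n)) -` cyl X w \<subseteq> (\<Union>u\<in>G_set M X \<delta> n k. cyl X u)"
  proof
    fix x assume x: "x \<in> cyl X w \<inter> (shift ^^ (k - n)) -` cyl X w"
    then have xX: "x \<in> X" and x0: "word_at x 0 n = w" and x1: "word_at ((shift ^^ (k - n)) x) 0 n = w"
      using lw by (auto simp: cyl_def)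
    define u where "u = word_at x 0 k"
    have uB: "u \<in> Bn X k" using xX by (auto simp: u_def Bn_def)
    have "take n u = word_at x 0 n" unfolding u_def using kn take_drop_word_at[of 0 n k x 0] by simp
    then have tu: "take n u = w" using x0 by simp
    have "drop (k - n) u = take n (drop (k - n) u)" using Bn_length[OF uB] kn by simp
    also have "\<dots> = word_at x (int (k - n)) n" unfolding u_def using kn take_drop_word_at[of "k - n" n k x 0] by simp
    also have "\<dots> = w" using x1 by (simp add: word_at_shift)
    finally have du: "drop (k - n) u = w" .
    have "u \<in> G_set M X \<delta> n k" using uB tu du wE by (simp add: G_set_def)
    moreover have "x \<in> cyl X u" using xX by (simp add: cyl_def u_def)
    ultimately show "x \<in> (\<Union>u\<in>G_set M X \<delta> n k. cyl X u)" by blast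
  qed
  have finG: "finite (G_set M X \<delta> n k)"
    by (rule finite_subset[OF _ Bn_finite[of X k]]) (auto simp: G_set_def)
  have "measure M (cyl X w \<inter> (shift ^^ (n + g')) -` cyl X w) \<le> measure M (\<Union>u\<in>G_set M X \<delta> n k. cyl X u)"
    using sub gk finG cyl_sets
    by (intro finite_measure.finite_measure_mono[OF prob_space.finite_measure[OF prob]] sets.finite_UN) auto
  moreover have "(1 / K) * \<mu> w * \<mu> w \<le> measure M (cyl X w \<inter> (shift ^^ (n + g')) -` cyl X w)"
  proof -
    have "g0 \<le> g'" using kn by (simp add: g'_def)
    then show ?thesis using mixl wB by blast
  qed
  ultimately show ?thesis by linarith
qed


lemma mu_E_lower: assumes wE: "w \<in> E_set M X \<delta> n" and n1: "1 \<le> n"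
  shows "exp (- real n * (entropy X M + \<delta>)) \<le> \<mu> w"
proof -
  have wB: "w \<in> Bn X n" using wE E_sub by blast
  have mp: "0 < \<mu> w" using mu_pos[OF wB] .
  have "\<bar>- (1 / real n) * ln (\<mu> w) - entropy X M\<bar> < \<delta>" using wE by (simp add: E_set_def)
  then have "- (1 / real n) * ln (\<mu> w) < entropy X M + \<delta>" by linarith
  then have "- ln (\<mu> w) < real n * (entropy X M + \<delta>)" using n1 by (simp add: field_simps)
  then have "- real n * (entropy X M + \<delta>) \<le> ln (\<mu> w)" by simp
  then have "exp (- real n * (entropy X M + \<delta>)) \<le> exp (ln (\<mu> w))" by simp
  then show ?thesis using mp by simp
qed

lemma psi_lower:
  assumes mixl: "\<forall>g\<ge>g0. \<forall>m. \<forall>u\<in>Bn X m. \<forall>v. measure M (cyl X u \<inter> (shift ^^ (m + g)) -` cyl X v) \<ge> (1 / K) * \<mu> u * \<mu> v"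
    and a0: "0 < \<alpha>" and a1: "\<alpha> \<le> 1" and n1: "1 \<le> n" and kn: "2 * n + g0 \<le> k"
    and Ene: "E_set M X \<delta> n \<noteq> {}"
  shows "(1 / real CARD('a) ^ n) * (1 / K) * \<alpha> ^ (k - n + 1) * exp (P * real k) *
      ((1 / K) * exp (- real n * (entropy X M + \<delta>)) * exp (- real n * (entropy X M + \<delta>)))
    \<le> expected_psi M X f \<delta> \<alpha> n k"
proof -
  obtain w where wE: "w \<in> E_set M X \<delta> n" using Ene by blast
  define ee where "ee = exp (- real n * (entropy X M + \<delta>))"
  have ml: "ee \<le> \<mu> w" using mu_E_lower[OF wE n1] by (simp add: ee_def)
  have A2: "(1 / K) * ee * ee \<le> measure M (\<Union>u\<in>G_set M X \<delta> n k. cyl X u)"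
  proof -
    have "(1 / K) * ee * ee \<le> (1 / K) * \<mu> w * \<mu> w"
      using ml K1 mu_nonneg[of w] by (intro mult_mono) (auto simp: ee_def)
    also have "\<dots> \<le> measure M (\<Union>u\<in>G_set M X \<delta> n k. cyl X u)" by (rule G_lower[OF mixl wE kn])
    finally show ?thesis .
  qed
  have finE: "finite (E_set M X \<delta> n)" using E_sub Bn_finite finite_subset by blast
  have cE1: "1 \<le> card (E_set M X \<delta> n)" using finE Ene by (simp add: Suc_le_eq card_gt_0_iff)
  have "card (E_set M X \<delta> n) \<le> card (Bn X n)" by (intro card_mono Bn_finite E_sub)
  then have "card (E_set M X \<delta> n) \<le> CARD('a) ^ n" using card_Bn_le by (metis le_trans)
  then have cE: "real (card (E_set M X \<delta> n)) \<le> real CARD('a) ^ n" by (metis of_nat_le_iff of_nat_power)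
  have A1: "1 / real CARD('a) ^ n \<le> 1 / real (card (E_set M X \<delta> n))"
    using cE cE1 by (intro divide_left_mono) auto
  define F where "F = (1 / K) * \<alpha> ^ (k - n + 1) * exp (P * real k)"
  have F0: "0 \<le> F" using K1 a0 by (simp add: F_def)
  have "(1 / real CARD('a) ^ n) * F * ((1 / K) * ee * ee)
      \<le> (1 / real (card (E_set M X \<delta> n))) * F * measure M (\<Union>u\<in>G_set M X \<delta> n k. cyl X u)"
    using A1 A2 F0 K1 by (intro mult_mono) (auto simp: ee_def)
  also have "\<dots> \<le> expected_psi M X f \<delta> \<alpha> n k"
    using first_claim[OF a0 a1, of n k \<delta>] kn by (simp add: F_def mult_ac)
  finally show ?thesis by (simp add: F_def ee_def mult_ac)
qed

end
theorem mainTheorem12: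
  fixes X :: "(int \<Rightarrow> 'a::finite) set"
    and f :: "(int \<Rightarrow> 'a) \<Rightarrow> real"
    and M :: "(int \<Rightarrow> 'a) measure"
    and P K \<alpha> \<gamma> \<delta> :: real
    and n0 :: nat
    and k :: "nat \<Rightarrow> nat"
  assumes SFT: "is_SFT X" and nontriv: "nontrivial X" and mixing: "top_mixing X"
    and hol: "holder_cont X f"
    and P_def: "P = pressure X f"
    and eq: "equilibrium_state X f M"
    and uniq: "\<forall>\<nu>. equilibrium_state X f \<nu> \<longrightarrow> \<nu> = M"
    and K1: "K > 1"
    and gibbs: "\<forall>m\<ge>1. \<forall>x\<in>X.
        1 / K \<le> mu M X (word_at x 0 m) / exp (- P * real m + birkhoff f m x) \<and>
        mu M X (word_at x 0 m) / exp (- P * real m + birkhoff f m x) \<le> K"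
    and quasi_mult: "\<forall>u v. u @ v \<in> lang X \<longrightarrow>
        mu M X (u @ v) \<le> K * mu M X u * mu M X v \<and>
        measure M (cyl X u \<inter> (shift ^^ length u) -` cyl X v) / mu M X u \<le> K * mu M X v"
    and mix_lower: "\<exists>g0::nat. g0 \<ge> 1 \<and> (\<forall>g\<ge>g0. \<forall>m. \<forall>u\<in>Bn X m. \<forall>v.
        measure M (cyl X u \<inter> (shift ^^ (m + g)) -` cyl X v) \<ge> (1 / K) * mu M X u * mu M X v)"
    and alpha: "gamma0 M X < \<alpha>" "\<alpha> \<le> 1"
    and gamma: "gamma0 M X < \<gamma>" "\<gamma> < \<alpha>"
    and n0: "\<forall>u\<in>lang X. length u \<ge> n0 \<longrightarrow> mu M X u \<le> \<gamma> ^ length u"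
    and delta: "0 < \<delta>" "\<delta> < (1/4) * ln (\<alpha> / \<gamma>)"
    and k_ge: "\<forall>n. n \<le> k n"
    and k_lim: "(\<lambda>n. real n / real (k n)) \<longlonglongrightarrow> 0"
    and k_small: "(\<lambda>n. real (k n)) \<in> o(\<lambda>n. real n ^ 2 / ln (real n))"
  shows "(\<forall>n\<ge>n0. expected_psi M X f \<delta> \<alpha> n (k n) \<ge>
            (1 / real (card (E_set M X \<delta> n))) * (1 / K) * \<alpha> ^ (k n - n + 1) * exp (P * real (k n)) *
            measure M (\<Union>u\<in>G_set M X \<delta> n (k n). cyl X u))
       \<and> (\<lambda>n. ln (expected_psi M X f \<delta> \<alpha> n (k n)) / real (k n)) \<longlonglongrightarrow> P + ln \<alpha>"
proof -
  have inv: "inv_prob_on X M" using eq by (simp add: equilibrium_state_def)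
  interpret rs X f M P K
    using SFT inv K1 gibbs quasi_mult by unfold_locales
  obtain g0 :: nat where g0: "\<forall>g\<ge>g0. \<forall>m. \<forall>u\<in>Bn X m. \<forall>v.
        measure M (cyl X u \<inter> (shift ^^ (m + g)) -` cyl X v) \<ge> (1 / K) * mu M X u * mu M X v"
    using mix_lower by blast
  have gpos: "0 < \<gamma>"
  proof (rule ccontr)
    assume "\<not> 0 < \<gamma>"
    then have gn: "\<gamma> \<le> 0" by simp
    obtain u where u: "u \<in> Bn X (2 * n0 + 1)" using Bn_ne by blast
    have "n0 \<le> length u" using Bn_length[OF u] by simp
    then have "mu M X u \<le> \<gamma> ^ length u" using n0 lang_Bn[OF u] by blast
    also have "\<gamma> ^ length u = \<gamma> * (\<gamma>^2) ^ n0" using Bn_length[OF u] by (simp add: power_mult)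
    also have "\<dots> \<le> 0" using gn by (intro mult_nonpos_nonneg) auto
    finally show False using mu_pos[OF u] by simp
  qed
  have a0: "0 < \<alpha>" using gpos gamma(2) by linarith
  have gam: "\<forall>b\<in>Bn X n. mu M X b \<le> \<gamma> ^ n" if "n0 \<le> n" for n
  proof
    fix b assume b: "b \<in> Bn X n"
    have "n0 \<le> length b" using Bn_length[OF b] that by simp
    then have "mu M X b \<le> \<gamma> ^ length b" using n0 lang_Bn[OF b] by blast
    then show "mu M X b \<le> \<gamma> ^ n" using Bn_length[OF b] by simp
  qed
  have claim1: "\<forall>n\<ge>n0. expected_psi M X f \<delta> \<alpha> n (k n) \<ge>
            (1 / real (card (E_set M X \<delta> n))) * (1 / K) * \<alpha> ^ (k n - n + 1) * exp (P * real (k n)) *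
            measure M (\<Union>u\<in>G_set M X \<delta> n (k n). cyl X u)"
    using first_claim[OF a0 alpha(2)] k_ge by blast
  have ksq: "\<forall>\<^sub>F n in sequentially. real (k n) \<le> real n ^ 2"
  proof -
    have "\<forall>\<^sub>F n in sequentially. norm (real (k n)) \<le> 1 * norm (real n ^ 2 / ln (real n))"
      using landau_o.smallD[OF k_small, of 1] by simp
    then show ?thesis using eventually_ge_at_top[of 3]
    proof eventually_elim
      case (elim n)
      have "exp 1 \<le> real n" using exp_le elim(2) by linarith
      then have "ln (exp 1) \<le> ln (real n)" using elim(2) by (subst ln_le_cancel_iff) auto
      then have l1: "1 \<le> ln (real n)" by simp
      then have "real n ^ 2 * 1 \<le> real n ^ 2 * ln (real n)" by (intro mult_left_mono) auto
      then have "real n ^ 2 / ln (real n) \<le> real n ^ 2" using l1 by (simp add: divide_le_eq)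
      moreover have "0 \<le> real n ^ 2 / ln (real n)" using l1 by simp
      moreover have "\<bar>ln (real n)\<bar> = ln (real n)" using l1 by simp
      then have "real (k n) \<le> real n ^ 2 / ln (real n)" using elim(1) by simp
      then show ?case using \<open>real n ^ 2 / ln (real n) \<le> real n ^ 2\<close> by linarith
    qed
  qed
  obtain N1 where N1: "\<forall>n\<ge>N1. E_set M X \<delta> n \<noteq> {}"
    using E_nonempty[of g0 \<delta>] g0 delta(1) by blast
  have ev3: "\<forall>\<^sub>F n in sequentially. real n / real (k n) < 1 / 3"
    using k_lim by (rule order_tendstoD) simp
  have ev: "\<forall>\<^sub>F n in sequentially.
      (1 / real CARD('a) ^ n) * (1 / K) * \<alpha> ^ (k n - n + 1) * exp (P * real (k n)) * ((1 / K) * exp (- real n * (entropy X M + \<delta>)) * exp (- real n * (entropy X M + \<delta>))) \<le> expected_psi M X f \<delta> \<alpha> n (k n)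
      \<and> expected_psi M X f \<delta> \<alpha> n (k n) \<le> K * exp (P * real (k n)) * (\<alpha> ^ (k n - n + 1) * (1 + real (k n) * K^2 * (\<gamma> / \<alpha>)^n) ^ (k n - n + 1))"
    using ev3 eventually_ge_at_top[of "N1 + n0 + g0 + 1"]
  proof eventually_elim
    case (elim n)
    have n1: "1 \<le> n" and nn0: "n0 \<le> n" and ng: "g0 \<le> n" and nN: "N1 \<le> n" using elim(2) by auto
    have kpos: "0 < real (k n)" using k_ge n1 by (metis of_nat_0_less_iff order_less_le_trans zero_less_one)
    have "3 * real n < real (k n)" using elim(1) kpos by (simp add: field_simps)
    then have kn: "2 * n + g0 \<le> k n" using ng by linarith
    have Ene: "E_set M X \<delta> n \<noteq> {}" using N1 nN by blast
    show ?case
      using psi_lower[OF g0 a0 alpha(2) n1 kn Ene]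
        psi_upper[OF gam[OF nn0] less_imp_le[OF gpos] a0 alpha(2) n1 k_ge[rule_format] Ene] by simp
  qed
  have c1: "1 \<le> real CARD('a)" by simp
  have lim: "(\<lambda>n. ln (expected_psi M X f \<delta> \<alpha> n (k n)) / real (k n)) \<longlonglongrightarrow> P + ln \<alpha>"
  proof -
    have r0: "0 < \<gamma> / \<alpha>" using gpos a0 by simp
    have r1: "\<gamma> / \<alpha> < 1" using gamma(2) a0 by simp
    show ?thesis by (rule asym[OF a0 alpha(2) r0 r1 K1 c1 k_ge k_lim ksq ev])
  qed
  show ?thesis using claim1 lim by blast
qed

end
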